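(* In the source coding problem with receiver side information described in the context, suppose $X=Y$ (i.e. $X_i=Y_i$ for all $i$). Then the set $\mathcal{R}$ of achievable rate triples equals the closure of $\bigcup_{p\in\mathcal{P}^*}\mathcal{R}^{(p)*}$.
   Context: Let $\mathcal{X},\mathcal{Y},\mathcal{U},\mathcal{V}$ be finite sets and let $\{(X_i,Y_i,U_i,V_i)\}_{i\ge1}$ be i.i.d. with joint distribution $\mathcal{Q}_{XYUV}$. For $i=0,1,2$ let $\mathcal{M}_i=\{1,\dots,|\mathcal{M}_i|\}$ be finite index sets. A code of block length $n$ consists of an encoder $e^{(n)}:\mathcal{X}^n\times\mathcal{Y}^n\to\mathcal{M}_0\times\mathcal{M}_1\times\mathcal{M}_2$, $(M_0,M_1,M_2)=e^{(n)}(X^n,Y^n)$, a decoder $d_x^{(n)}:\mathcal{M}_0\times\mathcal{M}_1\times\mathcal{U}^n\to\mathcal{X}^n$, $\widehat X^n=d_x^{(n)}(M_0,M_1,U^n)$, and a decoder $d_y^{(n)}:\mathcal{M}_0\times\mathcal{M}_2\times\mathcal{V}^n\to\mathcal{Y}^n$, $\widehat Y^n=d_y^{(n)}(M_0,M_2,V^n)$. Let $P_e=\max\{\Pr[\widehat X^n\ne X^n],\Pr[\widehat Y^n\ne Y^n]\}$. A triple $(R_0,R_1,R_2)$ is achievable if for every $\epsilon>0$ and all sufficiently large $n$ there is such a code with $P_e\le\epsilon$ and $(1/n)\log_2|\mathcal{M}_i|\le R_i+\epsilon$, $i=0,1,2$; $\mathcal{R}$ is the set of achievable triples. Let $\mathcal{A},\mathcal{B}$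 be finite sets with $|\mathcal{A}|\le|\mathcal{X}|+1$, $|\mathcal{B}|\le|\mathcal{X}|+1$. Let $\mathcal{P}^*$ be the family of probability functions $p$ on $\mathcal{A}\times\mathcal{B}\times\mathcal{X}\times\mathcal{U}\times\mathcal{V}$ with $p(a,b,x,u,v)=p(a,b|x)p(x,u,v)$ and $\sum_{(a,b)}p(a,b,x,u,v)=\mathcal{Q}_{XUV}(x,u,v)$ (the $(X,U,V)$-marginal of the source). For $p\in\mathcal{P}^*$ let $\mathcal{R}^{(p)*}$ be the set of $(R_0,R_1,R_2)$ with $R_0\ge\max\{H_p(X|A,U),H_p(X|B,V)\}$, $R_1\ge I_p(X;A|U)$, $R_2\ge I_p(X;B|V)$. *)

theory Defs
  imports "HOL-Analysis.Analysis"
begin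

definition block_prob :: "('a::finite \<Rightarrow> real) \<Rightarrow> nat \<Rightarrow> ('a list \<Rightarrow> bool) \<Rightarrow> real" where
  "block_prob Q n E = (\<Sum>zs\<in>{zs. length zs = n}. if E zs then prod_list (map Q zs) else 0)"

definition Xs :: "('x \<times> 'y \<times> 'u \<times> 'v) list \<Rightarrow> 'x list" where
  "Xs zs = map (\<lambda>(x,y,u,v). x) zs"
definition Ys :: "('x \<times> 'y \<times> 'u \<times> 'v) list \<Rightarrow> 'y list" where
  "Ys zs = map (\<lambda>(x,y,u,v). y) zs"
definition Us :: "('x \<times> 'y \<times> 'u \<times> 'v) list \<Rightarrow> 'u list" where
  "Us zs = map (\<lambda>(x,y,u,v). u) zs"
definition Vs :: "('x \<times> 'y \<times> 'u \<times> 'v) list \<Rightarrow> 'v list" where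
  "Vs zs = map (\<lambda>(x,y,u,v). v) zs"

definition is_code ::
  "nat \<Rightarrow> nat \<Rightarrow> nat \<Rightarrow> nat \<Rightarrow> ('x list \<times> 'y list \<Rightarrow> nat \<times> nat \<times> nat) \<Rightarrow> bool" where
  "is_code n M0 M1 M2 e \<longleftrightarrow>
     (\<forall>xs ys. length xs = n \<longrightarrow> length ys = n \<longrightarrow> e (xs, ys) \<in> {1..M0} \<times> {1..M1} \<times> {1..M2})"

definition err_x ::
  "('x::finite \<times> 'y::finite \<times> 'u::finite \<times> 'v::finite \<Rightarrow> real) \<Rightarrow> nat \<Rightarrow> ('x list \<times> 'y list \<Rightarrow> nat \<times> nat \<times> nat)
   \<Rightarrow> (nat \<Rightarrow> nat \<Rightarrow> 'u list \<Rightarrow> 'x list) \<Rightarrow> real" where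
  "err_x Q n e dx = block_prob Q n
     (\<lambda>zs. case e (Xs zs, Ys zs) of (m0, m1, m2) \<Rightarrow> dx m0 m1 (Us zs) \<noteq> Xs zs)"

definition err_y ::
  "('x::finite \<times> 'y::finite \<times> 'u::finite \<times> 'v::finite \<Rightarrow> real) \<Rightarrow> nat \<Rightarrow> ('x list \<times> 'y list \<Rightarrow> nat \<times> nat \<times> nat)
   \<Rightarrow> (nat \<Rightarrow> nat \<Rightarrow> 'v list \<Rightarrow> 'y list) \<Rightarrow> real" where
  "err_y Q n e dy = block_prob Q n
     (\<lambda>zs. case e (Xs zs, Ys zs) of (m0, m1, m2) \<Rightarrow> dy m0 m2 (Vs zs) \<noteq> Ys zs)"

definition achievable ::
  "('x::finite \<times> 'y::finite \<times> 'u::finite \<times> 'v::finite \<Rightarrow> real) \<Rightarrow> real \<times> real \<times> real \<Rightarrow> bool" where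
  "achievable Q R \<longleftrightarrow> (case R of (R0, R1, R2) \<Rightarrow>
     (\<forall>\<epsilon>>0. \<exists>N. \<forall>n\<ge>N. \<exists>M0 M1 M2 e
         (dx :: nat \<Rightarrow> nat \<Rightarrow> 'u list \<Rightarrow> 'x list) (dy :: nat \<Rightarrow> nat \<Rightarrow> 'v list \<Rightarrow> 'y list).
        M0 \<ge> 1 \<and> M1 \<ge> 1 \<and> M2 \<ge> 1 \<and> is_code n M0 M1 M2 e \<and>
        max (err_x Q n e dx) (err_y Q n e dy) \<le> \<epsilon> \<and>
        log 2 (real M0) / real n \<le> R0 + \<epsilon> \<and>
        log 2 (real M1) / real n \<le> R1 + \<epsilon> \<and>
        log 2 (real M2) / real n \<le> R2 + \<epsilon>))"

definition rate_region ::
  "('x::finite \<times> 'y::finite \<times> 'u::finite \<times> 'v::finite \<Rightarrow> real) \<Rightarrow> (real \<times> real \<times> real) set" where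
  "rate_region Q = {R. achievable Q R}"

definition marg :: "'w set \<Rightarrow> ('w \<Rightarrow> real) \<Rightarrow> ('w \<Rightarrow> 'z) \<Rightarrow> 'z \<Rightarrow> real" where
  "marg D p f z = (\<Sum>w\<in>D. if f w = z then p w else 0)"

definition cond_entropy :: "'w set \<Rightarrow> ('w \<Rightarrow> real) \<Rightarrow> ('w \<Rightarrow> 'a) \<Rightarrow> ('w \<Rightarrow> 'c) \<Rightarrow> real" where
  "cond_entropy D p f g =
     - (\<Sum>(a, c)\<in>(\<lambda>w. (f w, g w)) ` D.
          let pac = marg D p (\<lambda>w. (f w, g w)) (a, c); pc = marg D p g c
          in if pac = 0 then 0 else pac * log 2 (pac / pc))"

definition cond_mutual_info ::
  "'w set \<Rightarrow> ('w \<Rightarrow> real) \<Rightarrow> ('w \<Rightarrow> 'a) \<Rightarrow> ('w \<Rightarrow> 'b) \<Rightarrow> ('w \<Rightarrow> 'c) \<Rightarrow> real" where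
  "cond_mutual_info D p f g h =
     (\<Sum>(a, b, c)\<in>(\<lambda>w. (f w, g w, h w)) ` D.
          let pabc = marg D p (\<lambda>w. (f w, g w, h w)) (a, b, c);
              pac = marg D p (\<lambda>w. (f w, h w)) (a, c);
              pbc = marg D p (\<lambda>w. (g w, h w)) (b, c);
              pc = marg D p h c
          in if pabc = 0 then 0 else pabc * log 2 (pabc * pc / (pac * pbc)))"

text \<open>The auxiliary alphabets A, B (of size at most |X|+1) are realised,
  without loss of generality, inside {0..|X|} :: nat set; a pmf on a smaller
  alphabet is the same as a pmf on {0..|X|} vanishing outside it.\<close>

definition aux_dom :: "(nat \<times> nat \<times> 'x::finite \<times> 'u::finite \<times> 'v::finite) set" where
  "aux_dom = {..CARD('x)} \<times> {..CARD('x)} \<times> UNIV"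

definition Q_XUV :: "('x::finite \<times> 'y::finite \<times> 'u \<times> 'v \<Rightarrow> real) \<Rightarrow> 'x \<Rightarrow> 'u \<Rightarrow> 'v \<Rightarrow> real" where
  "Q_XUV Q x u v = (\<Sum>y\<in>UNIV. Q (x, y, u, v))"

definition Pstar ::
  "('x::finite \<times> 'y::finite \<times> 'u::finite \<times> 'v::finite \<Rightarrow> real)
   \<Rightarrow> (nat \<times> nat \<times> 'x \<times> 'u \<times> 'v \<Rightarrow> real) set" where
  "Pstar Q = {p. (\<forall>w. p w \<ge> 0) \<and>
      (\<forall>w. w \<notin> aux_dom \<longrightarrow> p w = 0) \<and>
      (\<forall>x u v. (\<Sum>(a, b)\<in>{..CARD('x)} \<times> {..CARD('x)}. p (a, b, x, u, v)) = Q_XUV Q x u v) \<and>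
      \<comment> \<open>p(a,b,x,u,v) = p(a,b|x) p(x,u,v), with the conditional cleared:
          p(a,b,x,u,v) p(x) = p(a,b,x) p(x,u,v)\<close>
      (\<forall>a b x u v.
         p (a, b, x, u, v) * marg aux_dom p (\<lambda>(a, b, x, u, v). x) x =
         marg aux_dom p (\<lambda>(a, b, x, u, v). (a, b, x)) (a, b, x) *
         marg aux_dom p (\<lambda>(a, b, x, u, v). (x, u, v)) (x, u, v))}"

definition Rstar :: "(nat \<times> nat \<times> 'x::finite \<times> 'u::finite \<times> 'v::finite \<Rightarrow> real) \<Rightarrow> (real \<times> real \<times> real) set" where
  "Rstar p = {(R0, R1, R2).
      R0 \<ge> max (cond_entropy aux_dom p (\<lambda>(a, b, x, u, v). x) (\<lambda>(a, b, x, u, v). (a, u)))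
               (cond_entropy aux_dom p (\<lambda>(a, b, x, u, v). x) (\<lambda>(a, b, x, u, v). (b, v))) \<and>
      R1 \<ge> cond_mutual_info aux_dom p (\<lambda>(a, b, x, u, v). x) (\<lambda>(a, b, x, u, v). a) (\<lambda>(a, b, x, u, v). u) \<and>
      R2 \<ge> cond_mutual_info aux_dom p (\<lambda>(a, b, x, u, v). x) (\<lambda>(a, b, x, u, v). b) (\<lambda>(a, b, x, u, v). v)}"

end

theory Submission
  imports Defs
begin


definition L :: "nat \<Rightarrow> 'a list set" where "L n = {zs. length zs = n}"

lemma finite_L[simp]: "finite (L n :: ('a::finite) list set)"
  unfolding L_def using finite_lists_length_eq[of "UNIV::'a set" n] by simp

lemma L_Suc: "L (Suc n) = (\<lambda>(x,xs). x#xs) ` (UNIV \<times> L n)"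
  by (auto simp: L_def length_Suc_conv image_iff)

lemma L_0: "L 0 = {[]}" by (auto simp: L_def)

lemma sum_L_Suc: "sum F (L (Suc n) :: ('a::finite) list set) = (\<Sum>x\<in>UNIV. \<Sum>xs\<in>L n. F (x#xs))"
proof -
  have "sum F (L (Suc n)) = sum (F \<circ> (\<lambda>(x,xs). x#xs)) (UNIV \<times> L n)"
    unfolding L_Suc by (rule sum.reindex) (auto simp: inj_on_def)
  also have "\<dots> = (\<Sum>x\<in>UNIV. \<Sum>xs\<in>L n. F (x#xs))"
    by (simp add: sum.cartesian_product split_def)
  finally show ?thesis .
qed

lemma sum_L_0: "sum F (L 0) = F []" by (simp add: L_0)

lemma prod_list_sum: "(\<Sum>xs\<in>L n. prod_list (map (f::'a::finite\<Rightarrow>real) xs)) = (\<Sum>x\<in>UNIV. f x)^n"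
proof (induction n)
  case 0 then show ?case by (simp add: sum_L_0)
next
  case (Suc n)
  have "(\<Sum>xs\<in>L (Suc n). prod_list (map f xs)) = (\<Sum>x\<in>UNIV. f x * (\<Sum>xs\<in>L n. prod_list (map f xs)))"
    by (simp add: sum_L_Suc sum_distrib_left)
  also have "\<dots> = (\<Sum>x\<in>UNIV. f x)^Suc n" by (simp add: Suc sum_distrib_right[symmetric])
  finally show ?case .
qed

lemma group_sum:
  fixes \<pi> :: "'a::finite \<Rightarrow> 'b::finite" and Q :: "'a \<Rightarrow> real"
  shows "(\<Sum>z\<in>UNIV. Q z * G (\<pi> z)) = (\<Sum>w\<in>UNIV. (\<Sum>z\<in>{z. \<pi> z = w}. Q z) * G w)"
proof -
  have "(\<Sum>w\<in>UNIV. (\<Sum>z\<in>{z. \<pi> z = w}. Q z) * G w) = (\<Sum>w\<in>UNIV. \<Sum>z\<in>UNIV. if \<pi> z = w then Q z * G w else 0)"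
    by (simp add: sum_distrib_right sum.inter_filter[symmetric])
  also have "\<dots> = (\<Sum>z\<in>UNIV. \<Sum>w\<in>UNIV. if \<pi> z = w then Q z * G w else 0)" by (rule sum.swap)
  also have "\<dots> = (\<Sum>z\<in>UNIV. Q z * G (\<pi> z))" by simp
  finally show ?thesis by simp
qed

lemma marg_list:
  fixes \<pi> :: "'a::finite \<Rightarrow> 'b::finite" and Q :: "'a \<Rightarrow> real"
  shows "(\<Sum>zs\<in>L n. prod_list (map Q zs) * F (map \<pi> zs)) =
         (\<Sum>ws\<in>L n. prod_list (map (\<lambda>w. \<Sum>z\<in>{z. \<pi> z = w}. Q z) ws) * F ws)"
proof (induction n arbitrary: F)
  case 0 then show ?case by (simp add: sum_L_0)
next
  case (Suc n)
  define P where "P = (\<lambda>w. \<Sum>z\<in>{z. \<pi> z = w}. Q z)"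
  have "(\<Sum>zs\<in>L (Suc n). prod_list (map Q zs) * F (map \<pi> zs)) =
        (\<Sum>z\<in>UNIV. Q z * (\<Sum>zs\<in>L n. prod_list (map Q zs) * F (\<pi> z # map \<pi> zs)))"
    by (simp add: sum_L_Suc sum_distrib_left mult.assoc)
  also have "\<dots> = (\<Sum>z\<in>UNIV. Q z * (\<Sum>ws\<in>L n. prod_list (map P ws) * F (\<pi> z # ws)))"
    using Suc[of "\<lambda>ws. F (\<pi> z # ws)" for z] by (simp add: P_def)
  also have "\<dots> = (\<Sum>w\<in>UNIV. P w * (\<Sum>ws\<in>L n. prod_list (map P ws) * F (w # ws)))"
    unfolding P_def by (rule group_sum)
  also have "\<dots> = (\<Sum>ws\<in>L (Suc n). prod_list (map P ws) * F ws)"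
    by (simp add: sum_L_Suc sum_distrib_left mult.assoc)
  finally show ?case by (simp add: P_def)
qed

lemma sum_L_zip: fixes F :: "('x \<times> 'u) list \<Rightarrow> 'r::comm_monoid_add" shows "(\<Sum>ws\<in>L n. F ws) = (\<Sum>us\<in>L n. \<Sum>xs\<in>L n. F (zip xs us))"
proof -
  have bij: "bij_betw (\<lambda>(us,xs). zip xs us) (L n \<times> L n) (L n :: ('x \<times> 'u) list set)"
    apply (rule bij_betwI')
      apply (auto simp: L_def zip_eq_conv)[2]
    subgoal for ws
      by (rule bexI[of _ "(map snd ws, map fst ws)"]) (auto simp: L_def zip_map_fst_snd)
    done
  have "(\<Sum>us\<in>L n. \<Sum>xs\<in>L n. F (zip xs us)) = (\<Sum>(us,xs)\<in>L n \<times> L n. F (zip xs us))"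
    by (simp add: sum.cartesian_product)
  also have "\<dots> = (\<Sum>ws\<in>L n. F ws)"
    using sum.reindex_bij_betw[OF bij, of F] by (simp add: split_def)
  finally show ?thesis by simp
qed

section \<open>Weak law of large numbers (Chebyshev)\<close>

lemma prod_nonneg_map: "(\<And>w. (P w::real) \<ge> 0) \<Longrightarrow> prod_list (map P ws) \<ge> 0"
  by (rule prod_list_nonneg) auto

lemma sum_list_add_map: "sum_list (map (\<lambda>x. f x + g x) xs) = sum_list (map f xs) + (sum_list (map g xs)::real)"
  by (induction xs) auto
lemma sum_list_diff_map: "sum_list (map (\<lambda>x. f x - g x) xs) = sum_list (map f xs) - (sum_list (map g xs)::real)"
  by (induction xs) auto
lemma sum_list_const_map: "sum_list (map (\<lambda>x. c) xs) = real (length xs) * (c::real)"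
  by (induction xs) (auto simp: algebra_simps)

lemma E_one: assumes "sum P UNIV = (1::real)" shows "(\<Sum>ws\<in>L n. prod_list (map (P::'a::finite\<Rightarrow>real) ws)) = 1"
  using prod_list_sum[of P n] assms by simp

lemma E_lin:
  fixes P h :: "'a::finite \<Rightarrow> real"
  assumes "sum P UNIV = 1" "(\<Sum>w\<in>UNIV. P w * h w) = 0"
  shows "(\<Sum>ws\<in>L n. prod_list (map P ws) * sum_list (map h ws)) = 0"
proof (induction n)
  case 0 then show ?case by (simp add: sum_L_0)
next
  case (Suc n)
  have "(\<Sum>ws\<in>L (Suc n). prod_list (map P ws) * sum_list (map h ws)) =
     (\<Sum>w\<in>UNIV. P w * (h w * (\<Sum>ws\<in>L n. prod_list (map P ws)) + (\<Sum>ws\<in>L n. prod_list (map P ws) * sum_list (map h ws))))"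
    by (simp add: sum_L_Suc algebra_simps sum.distrib sum_distrib_left)
  also have "\<dots> = 0" using Suc E_one[OF assms(1)] assms(2) by simp
  finally show ?case .
qed

lemma E_sq:
  fixes P h :: "'a::finite \<Rightarrow> real"
  assumes "sum P UNIV = 1" "(\<Sum>w\<in>UNIV. P w * h w) = 0"
  shows "(\<Sum>ws\<in>L n. prod_list (map P ws) * (sum_list (map h ws))^2) = real n * (\<Sum>w\<in>UNIV. P w * (h w)^2)"
proof -
  define V where "V = (\<Sum>w\<in>UNIV. P w * (h w)^2)"
  have "(\<Sum>ws\<in>L n. prod_list (map P ws) * (sum_list (map h ws))^2) = real n * V"
  proof (induction n)
    case 0 then show ?case by (simp add: sum_L_0)
  next
    case (Suc n)
    have "(\<Sum>ws\<in>L (Suc n). prod_list (map P ws) * (sum_list (map h ws))^2) =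
       (\<Sum>w\<in>UNIV. P w * ((h w)^2 * (\<Sum>ws\<in>L n. prod_list (map P ws)) + 2 * h w * (\<Sum>ws\<in>L n. prod_list (map P ws) * sum_list (map h ws))
          + (\<Sum>ws\<in>L n. prod_list (map P ws) * (sum_list (map h ws))^2)))"
      by (simp add: sum_L_Suc algebra_simps power2_eq_square sum.distrib sum_distrib_left)
    also have "\<dots> = (\<Sum>w\<in>UNIV. P w * (h w)^2 + P w * (real n * V))"
      using Suc E_one[OF assms(1)] E_lin[OF assms] by (simp add: algebra_simps)
    also have "\<dots> = V + (\<Sum>w\<in>UNIV. P w) * (real n * V)"
      by (simp add: sum.distrib V_def sum_distrib_right)
    also have "\<dots> = real (Suc n) * V" using assms(1) by (simp add: algebra_simps)
    finally show ?case .
  qed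
  then show ?thesis by (simp add: V_def)
qed

lemma chebyshev_list:
  fixes P h :: "'a::finite \<Rightarrow> real"
  assumes "\<And>w. P w \<ge> 0" "sum P UNIV = 1" "(\<Sum>w\<in>UNIV. P w * h w) = 0" "c > 0"
  shows "(\<Sum>ws\<in>L n. prod_list (map P ws) * (if c \<le> \<bar>sum_list (map h ws)\<bar> then 1 else 0))
           \<le> real n * (\<Sum>w\<in>UNIV. P w * (h w)^2) / c^2"
proof -
  have "(\<Sum>ws\<in>L n. prod_list (map P ws) * (if c \<le> \<bar>sum_list (map h ws)\<bar> then 1 else 0))
     \<le> (\<Sum>ws\<in>L n. prod_list (map P ws) * ((sum_list (map h ws))^2 / c^2))"
  proof (rule sum_mono)
    fix ws :: "'a list"
    have "(if c \<le> \<bar>sum_list (map h ws)\<bar> then 1 else 0) \<le> (sum_list (map h ws))^2 / c^2"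
    proof (cases "c \<le> \<bar>sum_list (map h ws)\<bar>")
      case True
      then have "c^2 \<le> \<bar>sum_list (map h ws)\<bar>^2" using assms(4) by (intro power_mono) auto
      then show ?thesis using True assms(4) by simp
    qed simp
    then show "prod_list (map P ws) * (if c \<le> \<bar>sum_list (map h ws)\<bar> then 1 else 0)
       \<le> prod_list (map P ws) * ((sum_list (map h ws))^2 / c^2)"
      using prod_nonneg_map[of P ws] assms(1) by (intro mult_left_mono) auto
  qed
  also have "\<dots> = (\<Sum>ws\<in>L n. prod_list (map P ws) * (sum_list (map h ws))^2) / c^2"
    by (simp add: sum_divide_distrib)
  also have "\<dots> = real n * (\<Sum>w\<in>UNIV. P w * (h w)^2) / c^2" using E_sq[OF assms(2,3)] by simp
  finally show ?thesis .
qed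


definition Ps :: "('x::finite \<times> 's \<Rightarrow> real) \<Rightarrow> 's \<Rightarrow> real" where "Ps P s = (\<Sum>x\<in>UNIV. P (x,s))"
definition cp :: "('x::finite \<times> 's \<Rightarrow> real) \<Rightarrow> 'x \<times> 's \<Rightarrow> real" where "cp P w = P w / Ps P (snd w)"
definition gH :: "('x::finite \<times> 's \<Rightarrow> real) \<Rightarrow> 'x \<times> 's \<Rightarrow> real" where "gH P w = - log 2 (cp P w)"
definition HH :: "('x::finite \<times> 's::finite \<Rightarrow> real) \<Rightarrow> real" where "HH P = (\<Sum>w\<in>UNIV. P w * gH P w)"

locale pw =
  fixes P :: "'x::finite \<times> 's::finite \<Rightarrow> real"
  assumes nonneg: "\<And>w. P w \<ge> 0" and total: "sum P UNIV = 1"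
begin

lemma P_le_Ps: "P (x,s) \<le> Ps P s"
  unfolding Ps_def using member_le_sum[of x UNIV "\<lambda>x. P (x,s)"] nonneg by auto

lemma Ps_nonneg: "Ps P s \<ge> 0" unfolding Ps_def using nonneg by (simp add: sum_nonneg)

lemma P_split: "P w = Ps P (snd w) * cp P w"
proof (cases w)
  case (Pair x s)
  show ?thesis
  proof (cases "Ps P s = 0")
    case True then have "P (x,s) = 0" using P_le_Ps[of x s] nonneg[of "(x,s)"] by simp
    then show ?thesis using Pair True by (simp add: cp_def)
  qed (simp add: Pair cp_def)
qed

lemma cp_nonneg: "cp P w \<ge> 0" unfolding cp_def using nonneg Ps_nonneg by simp

lemma cp_pos: "P w > 0 \<Longrightarrow> cp P w > 0"
  using P_le_Ps[of "fst w" "snd w"] unfolding cp_def by simp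

lemma cp_le1: "cp P w \<le> 1"
  using P_le_Ps[of "fst w" "snd w"] Ps_nonneg[of "snd w"] unfolding cp_def
  by (cases "Ps P (snd w) = 0") (auto simp: divide_le_eq_1)

lemma gH_nonneg: "P w > 0 \<Longrightarrow> gH P w \<ge> 0"
  using cp_pos[of w] cp_le1[of w] unfolding gH_def by simp

lemma HH_nonneg: "HH P \<ge> 0"
  unfolding HH_def
proof (rule sum_nonneg)
  fix w show "0 \<le> P w * gH P w" using gH_nonneg[of w] nonneg[of w]
    by (cases "P w = 0") auto
qed

lemma sum_cp_x: "(\<Sum>x\<in>UNIV. cp P (x,s)) \<le> 1"
  unfolding cp_def using Ps_nonneg[of s]
  by (cases "Ps P s = 0") (auto simp: Ps_def[symmetric] sum_divide_distrib[symmetric])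

lemma sum_prod_cp: "length us = n \<Longrightarrow> (\<Sum>xs\<in>L n. prod_list (map (cp P) (zip xs us))) \<le> 1"
proof (induction us arbitrary: n)
  case Nil then show ?case by (simp add: L_0)
next
  case (Cons u us)
  then obtain m where n: "n = Suc m" "length us = m" by auto
  have "(\<Sum>xs\<in>L n. prod_list (map (cp P) (zip xs (u#us)))) =
        (\<Sum>x\<in>UNIV. cp P (x,u) * (\<Sum>xs\<in>L m. prod_list (map (cp P) (zip xs us))))"
    by (simp add: n sum_L_Suc sum_distrib_left)
  also have "\<dots> \<le> (\<Sum>x\<in>UNIV. cp P (x,u) * 1)"
    by (intro sum_mono mult_left_mono Cons.IH n(2) cp_nonneg)
  also have "\<dots> \<le> 1" using sum_cp_x by simp
  finally show ?case .
qed

lemma card_typ: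
  assumes "t > 0" "length us = n"
  shows "real (card {xs\<in>L n. t \<le> prod_list (map (cp P) (zip xs us))}) \<le> 1 / t"
proof -
  let ?C = "{xs\<in>L n. t \<le> prod_list (map (cp P) (zip xs us))}"
  have "t * real (card ?C) = (\<Sum>xs\<in>?C. t)" by simp
  also have "\<dots> \<le> (\<Sum>xs\<in>?C. prod_list (map (cp P) (zip xs us)))" by (rule sum_mono) auto
  also have "\<dots> \<le> (\<Sum>xs\<in>L n. prod_list (map (cp P) (zip xs us)))"
    by (rule sum_mono2) (auto intro!: prod_list_nonneg simp: cp_nonneg)
  also have "\<dots> \<le> 1" by (rule sum_prod_cp[OF assms(2)])
  finally show ?thesis using assms(1) by (simp add: field_simps)
qed

lemma prod_cp_powr: "(\<forall>w\<in>set ws. P w > 0) \<Longrightarrow> prod_list (map (cp P) ws) = 2 powr (- sum_list (map (gH P) ws))"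
proof (induction ws)
  case Nil then show ?case by simp
next
  case (Cons w ws)
  have "cp P w = 2 powr (- gH P w)" using cp_pos[of w] Cons.prems by (simp add: gH_def)
  then show ?case using Cons by (simp add: powr_add[symmetric])
qed

lemma prod_nonzero_pos: "prod_list (map P ws) \<noteq> 0 \<Longrightarrow> \<forall>w\<in>set ws. P w > 0"
  using nonneg by (metis less_eq_real_def list.set_map image_eqI prod_list_zero_iff)

definition hh where "hh w = gH P w - HH P"
lemma hh_fun: "hh = (\<lambda>w. gH P w - HH P)" by (rule ext) (simp add: hh_def)

definition VV where "VV = (\<Sum>w\<in>UNIV. P w * (hh w)^2)"

lemma hh_mean: "(\<Sum>w\<in>UNIV. P w * hh w) = 0"
  unfolding hh_def by (simp add: algebra_simps sum_subtractf HH_def sum_distrib_right[symmetric] total)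

lemma tail_gen:
  assumes "\<delta> > 0" "n > 0"
    and ev: "\<And>ws. ws \<in> L n \<Longrightarrow> (\<forall>w\<in>set ws. P w > 0) \<Longrightarrow> E ws \<Longrightarrow> real n * \<delta> \<le> \<bar>sum_list (map (gH P) ws) - real n * HH P\<bar>"
  shows "(\<Sum>ws\<in>L n. prod_list (map P ws) * (if E ws then 1 else 0)) \<le> VV / (real n * \<delta>^2)"
proof -
  have "(\<Sum>ws\<in>L n. prod_list (map P ws) * (if E ws then 1 else 0)) \<le>
        (\<Sum>ws\<in>L n. prod_list (map P ws) * (if real n * \<delta> \<le> \<bar>sum_list (map hh ws)\<bar> then 1 else 0))"
  proof (rule sum_mono)
    fix ws :: "('x \<times> 's) list" assume ws: "ws \<in> L n"
    show "prod_list (map P ws) * (if E ws then 1 else 0) \<le> prod_list (map P ws) * (if real n * \<delta> \<le> \<bar>sum_list (map hh ws)\<bar> then 1 else 0)"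
    proof (cases "prod_list (map P ws) = 0")
      case False
      then have pos: "\<forall>w\<in>set ws. P w > 0" by (rule prod_nonzero_pos)
      have "sum_list (map hh ws) = sum_list (map (gH P) ws) - real n * HH P"
        using ws by (simp add: hh_fun sum_list_diff_map sum_list_const_map L_def)
      then show ?thesis using ev[OF ws pos] prod_nonneg_map[of P ws, OF nonneg] by auto
    qed simp
  qed
  also have "\<dots> \<le> real n * VV / (real n * \<delta>)^2"
    unfolding VV_def using assms by (intro chebyshev_list nonneg total hh_mean) auto
  also have "\<dots> = VV / (real n * \<delta>^2)" using assms by (simp add: power2_eq_square field_simps)
  finally show ?thesis .
qed

lemma tail_hi:
  assumes "\<delta> > 0" "n > 0"
  shows "(\<Sum>ws\<in>L n. prod_list (map P ws) * (if prod_list (map (cp P) ws) < 2 powr (- (real n * (HH P + \<delta>))) then 1 else 0))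
    \<le> VV / (real n * \<delta>^2)"
proof (rule tail_gen[OF assms])
  fix ws :: "('x \<times> 's) list" assume "\<forall>w\<in>set ws. P w > 0"
    "prod_list (map (cp P) ws) < 2 powr (- (real n * (HH P + \<delta>)))"
  then have "2 powr (- sum_list (map (gH P) ws)) < 2 powr (- (real n * (HH P + \<delta>)))"
    by (simp add: prod_cp_powr)
  then have "- sum_list (map (gH P) ws) < - (real n * (HH P + \<delta>))" by simp
  then show "real n * \<delta> \<le> \<bar>sum_list (map (gH P) ws) - real n * HH P\<bar>" by (simp add: algebra_simps)
qed

lemma tail_lo:
  assumes "\<delta> > 0" "n > 0"
  shows "(\<Sum>ws\<in>L n. prod_list (map P ws) * (if 2 powr (- (real n * (HH P - \<delta>))) < prod_list (map (cp P) ws) then 1 else 0))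
    \<le> VV / (real n * \<delta>^2)"
proof (rule tail_gen[OF assms])
  fix ws :: "('x \<times> 's) list" assume "\<forall>w\<in>set ws. P w > 0"
    "2 powr (- (real n * (HH P - \<delta>))) < prod_list (map (cp P) ws)"
  then have "2 powr (- (real n * (HH P - \<delta>))) < 2 powr (- sum_list (map (gH P) ws))"
    by (simp add: prod_cp_powr)
  then have "- (real n * (HH P - \<delta>)) < - sum_list (map (gH P) ws)" by simp
  then show "real n * \<delta> \<le> \<bar>sum_list (map (gH P) ws) - real n * HH P\<bar>" by (simp add: algebra_simps)
qed

end


section \<open>Converse bound and averaging\<close>

lemma prod_map_mult: "prod_list (map (\<lambda>w. f w * g w) ws) = prod_list (map f ws) * (prod_list (map g ws)::real)"
  by (induction ws) auto

lemma sum_Ps: "sum (Ps P) UNIV = sum P UNIV"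
proof -
  have "sum (Ps P) UNIV = (\<Sum>x\<in>UNIV. \<Sum>s\<in>UNIV. P (x,s))" unfolding Ps_def by (rule sum.swap)
  also have "\<dots> = (\<Sum>(x,s)\<in>UNIV\<times>UNIV. P (x,s))" by (rule sum.cartesian_product)
  also have "\<dots> = sum P UNIV" by simp
  finally show ?thesis .
qed

lemma map_snd_zip_f: "length xs = length us \<Longrightarrow> map (\<lambda>w. f (snd w)) (zip xs us) = map f us"
  by (induction xs us rule: list_induct2) auto
lemma map_fst_zip_f: "length xs = length us \<Longrightarrow> map (\<lambda>w. f (fst w)) (zip xs us) = map f xs"
  by (induction xs us rule: list_induct2) auto

context pw begin

lemma Ps_total: "sum (Ps P) UNIV = 1" using sum_Ps[of P] total by simp

lemma prod_split: "prod_list (map P ws) = prod_list (map (\<lambda>w. Ps P (snd w)) ws) * prod_list (map (cp P) ws)"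
  by (subst P_split[abs_def]) (simp add: prod_map_mult)

lemma conv_bound:
  assumes "t \<ge> 0" "\<And>us. finite (D us)" "\<And>us. real (card (D us)) \<le> K"
  shows "(\<Sum>ws\<in>L n. prod_list (map P ws) * (if map fst ws \<in> D (map snd ws) \<and> prod_list (map (cp P) ws) \<le> t then 1 else 0)) \<le> t * K"
proof -
  have "(\<Sum>ws\<in>L n. prod_list (map P ws) * (if map fst ws \<in> D (map snd ws) \<and> prod_list (map (cp P) ws) \<le> t then 1 else 0))
      \<le> (\<Sum>ws\<in>L n. prod_list (map (\<lambda>w. Ps P (snd w)) ws) * t * (if map fst ws \<in> D (map snd ws) then 1 else 0))"
  proof (rule sum_mono)
    fix ws :: "('x \<times> 's) list"
    have nn: "prod_list (map (\<lambda>w. Ps P (snd w)) ws) \<ge> 0" by (rule prod_list_nonneg) (auto simp: Ps_nonneg)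
    show "prod_list (map P ws) * (if map fst ws \<in> D (map snd ws) \<and> prod_list (map (cp P) ws) \<le> t then 1 else 0)
       \<le> prod_list (map (\<lambda>w. Ps P (snd w)) ws) * t * (if map fst ws \<in> D (map snd ws) then 1 else 0)"
      unfolding prod_split using nn assms(1) by (auto intro: mult_left_mono)
  qed
  also have "\<dots> = (\<Sum>us\<in>L n. \<Sum>xs\<in>L n. prod_list (map (Ps P) us) * t * (if xs \<in> D us then 1 else 0))"
    unfolding sum_L_zip[of _ n] by (intro sum.cong refl) (auto simp: L_def map_snd_zip_f)
  also have "\<dots> = (\<Sum>us\<in>L n. prod_list (map (Ps P) us) * t * real (card (L n \<inter> D us)))"
    by (intro sum.cong refl) (simp add: sum_distrib_left[symmetric] sum.If_cases Int_def conj_commute)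
  also have "\<dots> \<le> (\<Sum>us\<in>L n. prod_list (map (Ps P) us) * t * K)"
  proof (rule sum_mono)
    fix us :: "'s list"
    have "real (card (L n \<inter> D us)) \<le> K" using card_mono[OF assms(2)[of us], of "L n \<inter> D us"] assms(3)[of us]
      by (meson Int_lower2 le_trans of_nat_le_iff order.trans)
    moreover have "prod_list (map (Ps P) us) * t \<ge> 0"
      using assms(1) by (intro mult_nonneg_nonneg prod_list_nonneg) (auto simp: Ps_nonneg)
    ultimately show "prod_list (map (Ps P) us) * t * real (card (L n \<inter> D us)) \<le> prod_list (map (Ps P) us) * t * K"
      by (intro mult_left_mono)
  qed
  also have "\<dots> = t * K" using E_one[OF Ps_total, of n] by (simp add: sum_distrib_right[symmetric])
  finally show ?thesis .
qed

end


lemma pie_count: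
  fixes \<beta> :: "'m \<Rightarrow> 'k"
  assumes S: "finite S" "a \<in> S" "b \<in> S" "a \<noteq> b" and B: "finite B"
    and fib: "\<And>y0. y0 \<in> B \<Longrightarrow> real (card {y\<in>B. \<beta> y = \<beta> y0}) * K = real (card B)"
  shows "(\<Sum>f\<in>PiE S (\<lambda>_. B). if \<beta> (f a) = \<beta> (f b) then 1 else 0) * K = real (card (PiE S (\<lambda>_. B)))"
proof -
  define S' where "S' = S - {a}"
  have SS: "S = insert a S'" "a \<notin> S'" "b \<in> S'" "finite S'" using S by (auto simp: S'_def)
  have "(\<Sum>f\<in>PiE S (\<lambda>_. B). if \<beta> (f a) = \<beta> (f b) then 1 else (0::real)) =
      (\<Sum>(y,g)\<in>B \<times> PiE S' (\<lambda>_. B). if \<beta> y = \<beta> (g b) then 1 else 0)"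
    unfolding SS(1) PiE_insert_eq
    by (subst sum.reindex[OF inj_combinator[OF SS(2)]]) (use SS in \<open>auto intro!: sum.cong simp: split_def\<close>)
  also have "\<dots> = (\<Sum>y\<in>B. \<Sum>g\<in>PiE S' (\<lambda>_. B). if \<beta> y = \<beta> (g b) then 1 else 0)"
    by (simp add: sum.cartesian_product)
  also have "\<dots> = (\<Sum>g\<in>PiE S' (\<lambda>_. B). \<Sum>y\<in>B. if \<beta> y = \<beta> (g b) then 1 else 0)"
    by (rule sum.swap)
  also have "\<dots> = (\<Sum>g\<in>PiE S' (\<lambda>_. B). real (card {y\<in>B. \<beta> y = \<beta> (g b)}))"
    using B by (simp add: sum.If_cases Int_def)
  finally have eq: "(\<Sum>f\<in>PiE S (\<lambda>_. B). if \<beta> (f a) = \<beta> (f b) then 1 else (0::real)) =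
      (\<Sum>g\<in>PiE S' (\<lambda>_. B). real (card {y\<in>B. \<beta> y = \<beta> (g b)}))" .
  have "(\<Sum>g\<in>PiE S' (\<lambda>_. B). real (card {y\<in>B. \<beta> y = \<beta> (g b)})) * K
      = (\<Sum>g\<in>PiE S' (\<lambda>_. B). real (card B))"
    unfolding sum_distrib_right by (intro sum.cong refl fib) (use SS in \<open>auto simp: PiE_def\<close>)
  also have "\<dots> = real (card (PiE S (\<lambda>_. B)))"
    using SS B by (simp add: card_PiE)
  finally show ?thesis using eq by simp
qed

definition dec :: "('x::finite \<times> 's \<Rightarrow> real) \<Rightarrow> real \<Rightarrow> nat \<Rightarrow> ('x list \<Rightarrow> 'm) \<Rightarrow> ('m \<Rightarrow> 'k) \<Rightarrow> 'k \<Rightarrow> 's list \<Rightarrow> 'x list" where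
  "dec P t n f \<beta> m us = (if \<exists>xs\<in>L n. \<beta> (f xs) = m \<and> t \<le> prod_list (map (cp P) (zip xs us))
     then (SOME xs. xs\<in>L n \<and> \<beta> (f xs) = m \<and> t \<le> prod_list (map (cp P) (zip xs us))) else [])"

context pw begin

lemma avg:
  fixes \<beta> :: "'m \<Rightarrow> 'k"
  assumes t: "t > 0" and B: "finite B" and K: "K > 0"
    and fib: "\<And>y0. y0 \<in> B \<Longrightarrow> real (card {y\<in>B. \<beta> y = \<beta> y0}) * K = real (card B)"
  shows "(\<Sum>f\<in>PiE (L n) (\<lambda>_. B). \<Sum>ws\<in>L n. prod_list (map P ws) *
            (if dec P t n f \<beta> (\<beta> (f (map fst ws))) (map snd ws) \<noteq> map fst ws then 1 else 0))
    \<le> real (card (PiE (L n :: 'x list set) (\<lambda>_. B))) *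
        ((\<Sum>ws\<in>L n. prod_list (map P ws) * (if prod_list (map (cp P) ws) < t then 1 else 0)) + 1 / (t * K))"
proof -
  define FS where "FS = PiE (L n) (\<lambda>_::'x list. B)"
  define N where "N = real (card FS)"
  define atp where "atp ws = (if prod_list (map (cp P) ws) < t then 1 else (0::real))" for ws :: "('x\<times>'s) list"
  have point: "(\<Sum>f\<in>FS. (if dec P t n f \<beta> (\<beta> (f (map fst ws))) (map snd ws) \<noteq> map fst ws then 1 else (0::real)))
        \<le> N * (atp ws + 1 / (t * K))" if ws: "ws \<in> L n" for ws
  proof -
    define xs where "xs = map fst ws"
    define us where "us = map snd ws"
    have zws: "zip xs us = ws" by (simp add: xs_def us_def zip_map_fst_snd)
    have xsL: "xs \<in> L n" and lus: "length us = n" using ws by (auto simp: xs_def us_def L_def)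
    define C where "C = {xs'\<in>L n. t \<le> prod_list (map (cp P) (zip xs' us))}"
    have finC: "finite C" unfolding C_def by simp
    have pw1: "(if dec P t n f \<beta> (\<beta> (f xs)) us \<noteq> xs then 1 else (0::real))
         \<le> atp ws + (\<Sum>x'\<in>C - {xs}. if \<beta> (f x') = \<beta> (f xs) then 1 else 0)" for f
    proof (cases "prod_list (map (cp P) ws) < t")
      case True then show ?thesis by (simp add: atp_def sum_nonneg)
    next
      case False
      then have ex: "\<exists>x'\<in>L n. \<beta> (f x') = \<beta> (f xs) \<and> t \<le> prod_list (map (cp P) (zip x' us))"
        using xsL zws by auto
      define x' where "x' = (SOME x'. x'\<in>L n \<and> \<beta> (f x') = \<beta> (f xs) \<and> t \<le> prod_list (map (cp P) (zip x' us)))"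
      have x': "x'\<in>L n" "\<beta> (f x') = \<beta> (f xs)" "t \<le> prod_list (map (cp P) (zip x' us))"
        using someI_ex[OF ex[unfolded Bex_def]] unfolding x'_def by blast+
      have dx: "dec P t n f \<beta> (\<beta> (f xs)) us = x'" unfolding dec_def x'_def using ex by simp
      show ?thesis
      proof (cases "x' = xs")
        case True then show ?thesis using dx by (simp add: atp_def sum_nonneg)
      next
        case False
        have "x' \<in> C - {xs}" using x' False by (simp add: C_def)
        then have "1 \<le> (\<Sum>x'\<in>C - {xs}. if \<beta> (f x') = \<beta> (f xs) then 1 else (0::real))"
          using member_le_sum[of x' "C - {xs}" "\<lambda>x'. if \<beta> (f x') = \<beta> (f xs) then 1 else (0::real)"] finC x'(2)
          by auto
        then show ?thesis by (simp add: atp_def)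
      qed
    qed
    have "(\<Sum>f\<in>FS. (if dec P t n f \<beta> (\<beta> (f xs)) us \<noteq> xs then 1 else (0::real)))
        \<le> (\<Sum>f\<in>FS. atp ws + (\<Sum>x'\<in>C - {xs}. if \<beta> (f x') = \<beta> (f xs) then 1 else 0))"
      by (rule sum_mono) (rule pw1)
    also have "\<dots> = N * atp ws + (\<Sum>x'\<in>C - {xs}. \<Sum>f\<in>FS. if \<beta> (f x') = \<beta> (f xs) then 1 else 0)"
      by (simp add: sum.distrib N_def sum.swap[of _ FS])
    also have "\<dots> = N * atp ws + (\<Sum>x'\<in>C - {xs}. N / K)"
    proof -
      have "(\<Sum>f\<in>FS. if \<beta> (f x') = \<beta> (f xs) then 1 else 0) = N / K" if "x' \<in> C - {xs}" for x'
        using pie_count[of "L n" x' xs B \<beta> K] that xsL B fib K unfolding FS_def N_def C_def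
        by (simp add: field_simps)
      then show ?thesis by simp
    qed
    also have "\<dots> \<le> N * atp ws + N / (t * K)"
    proof -
      have "real (card (C - {xs})) \<le> 1 / t"
        using card_typ[OF t lus] card_Diff1_le[of C xs] unfolding C_def
        by (meson of_nat_le_iff order.trans)
      then have "real (card (C - {xs})) * (N / K) \<le> (1/t) * (N / K)"
        using K by (intro mult_right_mono) (auto simp: N_def)
      then show ?thesis by simp
    qed
    finally show ?thesis by (simp add: xs_def us_def algebra_simps)
  qed
  have "(\<Sum>f\<in>FS. \<Sum>ws\<in>L n. prod_list (map P ws) *
            (if dec P t n f \<beta> (\<beta> (f (map fst ws))) (map snd ws) \<noteq> map fst ws then 1 else 0))
      = (\<Sum>ws\<in>L n. prod_list (map P ws) * (\<Sum>f\<in>FS.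
            (if dec P t n f \<beta> (\<beta> (f (map fst ws))) (map snd ws) \<noteq> map fst ws then 1 else 0)))"
    by (simp add: sum.swap[of _ FS] sum_distrib_left)
  also have "\<dots> \<le> (\<Sum>ws\<in>L n. prod_list (map P ws) * (N * (atp ws + 1 / (t * K))))"
    by (intro sum_mono mult_left_mono point prod_nonneg_map nonneg)
  also have "\<dots> = N * ((\<Sum>ws\<in>L n. prod_list (map P ws) * atp ws) + (\<Sum>ws\<in>L n. prod_list (map P ws)) / (t * K))"
    by (simp add: algebra_simps sum.distrib sum_distrib_left sum_divide_distrib)
  also have "\<dots> = N * ((\<Sum>ws\<in>L n. prod_list (map P ws) * atp ws) + 1 / (t * K))"
    using E_one[OF total] by simp
  finally show ?thesis unfolding FS_def N_def atp_def .
qed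

end


section \<open>Generic information identities\<close>

definition mk :: "'w set \<Rightarrow> ('w \<Rightarrow> real) \<Rightarrow> ('w \<Rightarrow> 'k) \<Rightarrow> 'w \<Rightarrow> real" where
  "mk D p F w = marg D p F (F w)"

lemma sum_marg:
  assumes "finite D"
  shows "(\<Sum>k\<in>F`D. marg D p F k * \<phi> k) = (\<Sum>w\<in>D. p w * \<phi> (F w))"
proof -
  have "(\<Sum>w\<in>D. p w * \<phi> (F w)) = (\<Sum>k\<in>F`D. \<Sum>w\<in>{w\<in>D. F w = k}. p w * \<phi> (F w))"
    by (rule sum.image_gen) fact
  also have "\<dots> = (\<Sum>k\<in>F`D. marg D p F k * \<phi> k)"
  proof (intro sum.cong refl)
    fix k
    have "(\<Sum>w\<in>{w\<in>D. F w = k}. p w * \<phi> (F w)) = (\<Sum>w\<in>{w\<in>D. F w = k}. p w) * \<phi> k"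
      by (simp add: sum_distrib_right)
    also have "(\<Sum>w\<in>{w\<in>D. F w = k}. p w) = marg D p F k"
      unfolding marg_def using assms by (simp add: sum.inter_filter)
    finally show "(\<Sum>w\<in>{w\<in>D. F w = k}. p w * \<phi> (F w)) = marg D p F k * \<phi> k" .
  qed
  finally show ?thesis by simp
qed

lemma ce_sum:
  assumes "finite D"
  shows "cond_entropy D p f g = - (\<Sum>w\<in>D. p w *
     (if mk D p (\<lambda>w. (f w, g w)) w = 0 then 0 else log 2 (mk D p (\<lambda>w. (f w, g w)) w / mk D p g w)))"
proof -
  define \<phi> where "\<phi> k = (if marg D p (\<lambda>w. (f w, g w)) k = 0 then 0
      else log 2 (marg D p (\<lambda>w. (f w, g w)) k / marg D p g (snd k)))" for k
  have "(\<lambda>(a, c). let pac = marg D p (\<lambda>w. (f w, g w)) (a, c); pc = marg D p g c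
          in if pac = 0 then 0 else pac * log 2 (pac / pc)) = (\<lambda>k. marg D p (\<lambda>w. (f w, g w)) k * \<phi> k)"
    by (auto simp: Let_def fun_eq_iff \<phi>_def)
  then have "cond_entropy D p f g = - (\<Sum>k\<in>(\<lambda>w. (f w, g w))`D. marg D p (\<lambda>w. (f w, g w)) k * \<phi> k)"
    unfolding cond_entropy_def by simp
  also have "\<dots> = - (\<Sum>w\<in>D. p w * \<phi> (f w, g w))" using sum_marg[OF assms, where F="\<lambda>w. (f w, g w)" and p=p and \<phi>=\<phi>] by simp
  finally show ?thesis unfolding \<phi>_def mk_def by (simp cong: if_cong)
qed

lemma cmi_sum:
  assumes "finite D"
  shows "cond_mutual_info D p f g h = (\<Sum>w\<in>D. p w *
     (if mk D p (\<lambda>w. (f w, g w, h w)) w = 0 then 0 else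
        log 2 (mk D p (\<lambda>w. (f w, g w, h w)) w * mk D p h w / (mk D p (\<lambda>w. (f w, h w)) w * mk D p (\<lambda>w. (g w, h w)) w))))"
proof -
  define \<phi> where "\<phi> k = (if marg D p (\<lambda>w. (f w, g w, h w)) k = 0 then 0
      else log 2 (marg D p (\<lambda>w. (f w, g w, h w)) k * marg D p h (snd (snd k)) /
        (marg D p (\<lambda>w. (f w, h w)) (fst k, snd (snd k)) * marg D p (\<lambda>w. (g w, h w)) (fst (snd k), snd (snd k)))))" for k
  have "(\<lambda>(a, b, c). let pabc = marg D p (\<lambda>w. (f w, g w, h w)) (a, b, c);
              pac = marg D p (\<lambda>w. (f w, h w)) (a, c);
              pbc = marg D p (\<lambda>w. (g w, h w)) (b, c);
              pc = marg D p h c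
          in if pabc = 0 then 0 else pabc * log 2 (pabc * pc / (pac * pbc))) = (\<lambda>k. marg D p (\<lambda>w. (f w, g w, h w)) k * \<phi> k)"
    by (auto simp: Let_def fun_eq_iff \<phi>_def)
  then have "cond_mutual_info D p f g h = (\<Sum>k\<in>(\<lambda>w. (f w, g w, h w))`D. marg D p (\<lambda>w. (f w, g w, h w)) k * \<phi> k)"
    unfolding cond_mutual_info_def by simp
  also have "\<dots> = (\<Sum>w\<in>D. p w * \<phi> (f w, g w, h w))" using sum_marg[OF assms, where F="\<lambda>w. (f w, g w, h w)" and p=p and \<phi>=\<phi>] by simp
  finally show ?thesis unfolding \<phi>_def mk_def by (simp cong: if_cong)
qed

locale fd =
  fixes D :: "'w set" and p :: "'w \<Rightarrow> real"
  assumes finD: "finite D" and pnn: "\<And>w. p w \<ge> 0"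
begin

lemma mk_ge: "w \<in> D \<Longrightarrow> mk D p F w \<ge> p w"
  unfolding mk_def marg_def
  using member_le_sum[of w D "\<lambda>w'. if F w' = F w then p w' else 0"] finD pnn by auto

lemma mk_nonneg: "mk D p F w \<ge> 0"
  unfolding mk_def marg_def using pnn by (simp add: sum_nonneg)

lemma mk_mono: assumes a: "\<And>w'. F w' = F w \<Longrightarrow> G w' = G w" shows "mk D p F w \<le> mk D p G w"
  unfolding mk_def marg_def
proof (rule sum_mono)
  fix w' show "(if F w' = F w then p w' else 0) \<le> (if G w' = G w then p w' else 0)"
  proof (cases "F w' = F w")
    case True
    then have "G w' = G w" by (rule a)
    then show ?thesis using True by simp
  next
    case False then show ?thesis using pnn[of w'] by simp
  qed
qed

lemma mk_eq: "(\<And>w'. F w' = F w \<longleftrightarrow> G w' = G w) \<Longrightarrow> mk D p F w = mk D p G w"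
  unfolding mk_def marg_def by (intro sum.cong refl) (simp only:)

lemma chain:
  "cond_entropy D p f (\<lambda>w. (g w, h w)) + cond_mutual_info D p f g h = cond_entropy D p f h"
proof -
  define m3 where "m3 = mk D p (\<lambda>w. (f w, g w, h w))"
  define mh where "mh = mk D p h"
  define mfh where "mfh = mk D p (\<lambda>w. (f w, h w))"
  define mgh where "mgh = mk D p (\<lambda>w. (g w, h w))"
  define A where "A w = p w * (if m3 w = 0 then 0 else log 2 (m3 w / mgh w))" for w
  define B where "B w = p w * (if m3 w = 0 then 0 else log 2 (m3 w * mh w / (mfh w * mgh w)))" for w
  define C where "C w = p w * (if mfh w = 0 then 0 else log 2 (mfh w / mh w))" for w
  have pt: "B w - A w = - C w" if w: "w \<in> D" for w
  proof (cases "p w = 0")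
    case False
    then have pw: "p w > 0" using pnn[of w] by simp
    have a: "m3 w > 0" "mh w > 0" "mfh w > 0" "mgh w > 0"
      unfolding m3_def mh_def mfh_def mgh_def using mk_ge[OF w] pw by (meson less_le_trans)+
    have "log 2 (m3 w * mh w / (mfh w * mgh w)) = log 2 (m3 w) + log 2 (mh w) - log 2 (mfh w) - log 2 (mgh w)"
      using a by (simp add: log_mult log_divide)
    moreover have "log 2 (m3 w / mgh w) = log 2 (m3 w) - log 2 (mgh w)" using a by (simp add: log_divide)
    moreover have "log 2 (mfh w / mh w) = log 2 (mfh w) - log 2 (mh w)" using a by (simp add: log_divide)
    ultimately show ?thesis using a unfolding A_def B_def C_def by (simp add: right_diff_distrib distrib_left)
  qed (simp add: A_def B_def C_def)
  have eq: "mk D p (\<lambda>w. (f w, (g w, h w))) = m3"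
    unfolding m3_def by (rule ext, rule mk_eq) auto
  have "cond_entropy D p f (\<lambda>w. (g w, h w)) = - (\<Sum>w\<in>D. A w)"
    unfolding ce_sum[OF finD] eq A_def mgh_def ..
  moreover have "cond_mutual_info D p f g h = (\<Sum>w\<in>D. B w)"
    unfolding cmi_sum[OF finD] B_def m3_def mh_def mfh_def mgh_def ..
  moreover have "cond_entropy D p f h = - (\<Sum>w\<in>D. C w)"
    unfolding ce_sum[OF finD] C_def mfh_def mh_def ..
  moreover have "(\<Sum>w\<in>D. B w - A w) = (\<Sum>w\<in>D. - C w)" by (rule sum.cong) (use pt in auto)
  ultimately show ?thesis by (simp add: sum_subtractf sum_negf)
qed

lemma ce_nonneg: "cond_entropy D p f g \<ge> 0"
  unfolding ce_sum[OF finD]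
proof -
  have "p w * (if mk D p (\<lambda>w. (f w, g w)) w = 0 then 0 else log 2 (mk D p (\<lambda>w. (f w, g w)) w / mk D p g w)) \<le> 0"
    if w: "w \<in> D" for w
  proof (cases "p w = 0")
    case False
    then have pw: "p w > 0" using pnn[of w] by simp
    have a: "mk D p (\<lambda>w. (f w, g w)) w > 0" using mk_ge[OF w] pw by (meson less_le_trans)
    have b: "mk D p (\<lambda>w. (f w, g w)) w \<le> mk D p g w" by (rule mk_mono) auto
    have "log 2 (mk D p (\<lambda>w. (f w, g w)) w / mk D p g w) \<le> 0"
      using a b by (simp add: divide_le_eq_1)
    then show ?thesis using pw by (simp add: mult_nonneg_nonpos)
  qed simp
  then show "0 \<le> - (\<Sum>w\<in>D. p w * (if mk D p (\<lambda>w. (f w, g w)) w = 0 then 0 else log 2 (mk D p (\<lambda>w. (f w, g w)) w / mk D p g w)))"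
    by (simp add: sum_nonpos)
qed


lemma KLI:
  "(\<Sum>w\<in>D. p w * mk D p (\<lambda>w. (f w, h w)) w * mk D p (\<lambda>w. (g w, h w)) w /
       (mk D p (\<lambda>w. (f w, g w, h w)) w * mk D p h w)) \<le> (\<Sum>w\<in>D. p w)"
proof -
  define m3 where "m3 = mk D p (\<lambda>w. (f w, g w, h w))"
  define mh where "mh = mk D p h"
  define T where "T w w1 w2 = p w * (if (f w1, h w1) = (f w, h w) then p w1 else 0) *
      (if (g w2, h w2) = (g w, h w) then p w2 else 0) / (m3 w * mh w)" for w w1 w2
  have "(\<Sum>w\<in>D. p w * mk D p (\<lambda>w. (f w, h w)) w * mk D p (\<lambda>w. (g w, h w)) w / (m3 w * mh w))
       = (\<Sum>w\<in>D. \<Sum>w2\<in>D. \<Sum>w1\<in>D. T w w1 w2)"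
    unfolding T_def mk_def marg_def
    by (simp add: sum_distrib_left sum_distrib_right sum_divide_distrib)
  also have "\<dots> = (\<Sum>w\<in>D. \<Sum>w1\<in>D. \<Sum>w2\<in>D. T w w1 w2)" by (intro sum.cong refl sum.swap)
  also have "\<dots> = (\<Sum>w1\<in>D. \<Sum>w\<in>D. \<Sum>w2\<in>D. T w w1 w2)" by (rule sum.swap)
  also have "\<dots> = (\<Sum>w1\<in>D. \<Sum>w2\<in>D. \<Sum>w\<in>D. T w w1 w2)" by (intro sum.cong refl sum.swap)
  also have "\<dots> \<le> (\<Sum>w1\<in>D. \<Sum>w2\<in>D. if h w2 = h w1 then p w1 * p w2 / mh w1 else 0)"
  proof (intro sum_mono)
    fix w1 w2
    show "(\<Sum>w\<in>D. T w w1 w2) \<le> (if h w2 = h w1 then p w1 * p w2 / mh w1 else 0)"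
    proof (cases "h w2 = h w1")
      case False
      then have "T w w1 w2 = 0" for w unfolding T_def by auto
      then show ?thesis using False by simp
    next
      case True
      define c where "c = (\<Sum>w\<in>D. if (f w, g w, h w) = (f w1, g w2, h w1) then p w else 0)"
      have c0: "c \<ge> 0" unfolding c_def using pnn by (simp add: sum_nonneg)
      have Tw: "T w w1 w2 = (if (f w, g w, h w) = (f w1, g w2, h w1) then p w1 * p w2 * p w / (c * mh w1) else 0)" for w
      proof (cases "(f w, g w, h w) = (f w1, g w2, h w1)")
        case True2: True
        have "m3 w = c" unfolding m3_def mk_def marg_def c_def using True2 by simp
        moreover have "mh w = mh w1" unfolding mh_def mk_def marg_def using True2 by simp
        ultimately show ?thesis unfolding T_def using True True2 by auto
      next
        case False
        then show ?thesis unfolding T_def using True by auto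
      qed
      have "(\<Sum>w\<in>D. T w w1 w2) = (\<Sum>w\<in>D. p w1 * p w2 / (c * mh w1) * (if (f w, g w, h w) = (f w1, g w2, h w1) then p w else 0))"
        by (rule sum.cong[OF refl]) (simp only: Tw, simp)
      also have "\<dots> = p w1 * p w2 / (c * mh w1) * c"
        by (simp only: c_def sum_distrib_left)
      also have "\<dots> \<le> p w1 * p w2 / mh w1"
      proof (cases "c = 0")
        case False then show ?thesis by simp
      next
        case True then show ?thesis using pnn[of w1] pnn[of w2] mk_nonneg[of h w1] by (simp add: mh_def)
      qed
      finally show ?thesis using True by simp
    qed
  qed
  also have "\<dots> = (\<Sum>w1\<in>D. p w1 / mh w1 * mh w1)"
    by (intro sum.cong refl) (simp add: mh_def mk_def marg_def sum_distrib_left eq_commute if_distrib cong: if_cong)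
  also have "\<dots> \<le> (\<Sum>w1\<in>D. p w1)"
    by (intro sum_mono) (use pnn in auto)
  finally show ?thesis unfolding m3_def mh_def .
qed

lemma cmi_nonneg: "cond_mutual_info D p f g h \<ge> 0"
proof -
  define m3 where "m3 = mk D p (\<lambda>w. (f w, g w, h w))"
  define mh where "mh = mk D p h"
  define mfh where "mfh = mk D p (\<lambda>w. (f w, h w))"
  define mgh where "mgh = mk D p (\<lambda>w. (g w, h w))"
  have pt: "p w * (if m3 w = 0 then 0 else log 2 (m3 w * mh w / (mfh w * mgh w)))
     \<ge> (p w - p w * mfh w * mgh w / (m3 w * mh w)) / ln 2" if w: "w \<in> D" for w
  proof (cases "p w = 0")
    case False
    then have pw: "p w > 0" using pnn[of w] by simp
    have a: "m3 w > 0" "mh w > 0" "mfh w > 0" "mgh w > 0"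
      unfolding m3_def mh_def mfh_def mgh_def using mk_ge[OF w] pw by (meson less_le_trans)+
    define r where "r = m3 w * mh w / (mfh w * mgh w)"
    have r: "r > 0" using a by (simp add: r_def)
    have "ln (1/r) \<le> 1/r - 1" using r by (intro ln_le_minus_one) simp
    then have "1 - 1/r \<le> ln r" using r by (simp add: ln_div)
    then have "(1 - 1/r) / ln 2 \<le> log 2 r" unfolding log_def by (simp add: divide_right_mono)
    then have "p w * ((1 - 1/r) / ln 2) \<le> p w * log 2 r" using pw by (intro mult_left_mono) auto
    moreover have "p w * ((1 - 1/r) / ln 2) = (p w - p w * mfh w * mgh w / (m3 w * mh w)) / ln 2"
      using a by (simp add: r_def field_simps)
    ultimately show ?thesis using a by (simp add: r_def)
  qed simp
  have "(\<Sum>w\<in>D. (p w - p w * mfh w * mgh w / (m3 w * mh w)) / ln 2)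
      \<le> cond_mutual_info D p f g h"
    unfolding cmi_sum[OF finD] m3_def[symmetric] mh_def[symmetric] mfh_def[symmetric] mgh_def[symmetric]
    by (rule sum_mono) (rule pt)
  moreover have "(\<Sum>w\<in>D. (p w - p w * mfh w * mgh w / (m3 w * mh w)) / ln 2) =
       ((\<Sum>w\<in>D. p w) - (\<Sum>w\<in>D. p w * mfh w * mgh w / (m3 w * mh w))) / ln 2"
    by (simp add: sum_divide_distrib[symmetric] sum_subtractf)
  moreover have "(\<Sum>w\<in>D. p w * mfh w * mgh w / (m3 w * mh w)) \<le> (\<Sum>w\<in>D. p w)"
    using KLI unfolding m3_def mh_def mfh_def mgh_def .
  ultimately show ?thesis by (smt (verit) divide_nonneg_pos ln_gt_zero)
qed
end


lemma sum_aux_dom: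
  "sum G (aux_dom :: (nat \<times> nat \<times> 'x::finite \<times> 'u::finite \<times> 'v::finite) set) =
     (\<Sum>a\<le>CARD('x). \<Sum>b\<le>CARD('x). \<Sum>t\<in>UNIV. G (a,b,t))"
  unfolding aux_dom_def by (simp add: sum.cartesian_product)

lemma QX:
  fixes Q :: "'x::finite \<times> 'y::finite \<times> 'u::finite \<times> 'v::finite \<Rightarrow> real"
  shows "(\<Sum>t\<in>UNIV. Q_XUV Q (fst t) (fst (snd t)) (snd (snd t)) * H t) =
         (\<Sum>z\<in>UNIV. Q z * H (fst z, fst (snd (snd z)), snd (snd (snd z))))"
proof -
  have bij: "bij_betw (\<lambda>(t, y). (fst t, y, snd t)) (UNIV \<times> UNIV) (UNIV :: ('x \<times> 'y \<times> 'u \<times> 'v) set)"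
    by (rule bij_betwI') (auto simp: image_iff)
  have "(\<Sum>z\<in>UNIV. Q z * H (fst z, fst (snd (snd z)), snd (snd (snd z)))) =
        (\<Sum>(t,y)\<in>UNIV \<times> UNIV. Q (fst t, y, snd t) * H t)"
    using sum.reindex_bij_betw[OF bij, of "\<lambda>z. Q z * H (fst z, fst (snd (snd z)), snd (snd (snd z)))"]
    by (simp add: split_def)
  also have "\<dots> = (\<Sum>t\<in>UNIV. \<Sum>y\<in>UNIV. Q (fst t, y, snd t) * H t)"
    by (simp add: sum.cartesian_product)
  also have "\<dots> = (\<Sum>t\<in>UNIV. Q_XUV Q (fst t) (fst (snd t)) (snd (snd t)) * H t)"
    by (simp add: Q_XUV_def sum_distrib_right)
  finally show ?thesis by simp
qed

definition "fX = (\<lambda>(a::nat, b::nat, x, u, v). x)"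
definition "fA = (\<lambda>(a::nat, b::nat, x, u, v). a)"
definition "fB = (\<lambda>(a::nat, b::nat, x, u, v). b)"
definition "fU = (\<lambda>(a::nat, b::nat, x, u, v). u)"
definition "fV = (\<lambda>(a::nat, b::nat, x, u, v). v)"

definition piu :: "'x \<times> 'y \<times> 'u \<times> 'v \<Rightarrow> 'x \<times> 'u" where "piu z = (fst z, fst (snd (snd z)))"
definition piv :: "'x \<times> 'y \<times> 'u \<times> 'v \<Rightarrow> 'x \<times> 'v" where "piv z = (fst z, snd (snd (snd z)))"
definition Pu :: "('x::finite \<times> 'y::finite \<times> 'u::finite \<times> 'v::finite \<Rightarrow> real) \<Rightarrow> 'x \<times> 'u \<Rightarrow> real" where
  "Pu Q w = (\<Sum>z\<in>{z. piu z = w}. Q z)"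
definition Pv :: "('x::finite \<times> 'y::finite \<times> 'u::finite \<times> 'v::finite \<Rightarrow> real) \<Rightarrow> 'x \<times> 'v \<Rightarrow> real" where
  "Pv Q w = (\<Sum>z\<in>{z. piv z = w}. Q z)"

lemma TL:
  fixes Q :: "'x::finite \<times> 'y::finite \<times> 'u::finite \<times> 'v::finite \<Rightarrow> real"
    and p :: "nat \<times> nat \<times> 'x \<times> 'u \<times> 'v \<Rightarrow> real"
  assumes M: "\<forall>x u v. (\<Sum>(a, b)\<in>{..CARD('x)} \<times> {..CARD('x)}. p (a, b, x, u, v)) = Q_XUV Q x u v"
  shows "(\<Sum>w\<in>aux_dom. p w * G (fX w, fU w, fV w)) = (\<Sum>z\<in>UNIV. Q z * G (fst z, fst (snd (snd z)), snd (snd (snd z))))"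
proof -
  have "(\<Sum>w\<in>aux_dom. p w * G (fX w, fU w, fV w)) =
     (\<Sum>a\<le>CARD('x). \<Sum>b\<le>CARD('x). \<Sum>t\<in>UNIV. p (a,b,t) * G t)"
    by (simp add: sum_aux_dom fX_def fU_def fV_def split_def)
  also have "\<dots> = (\<Sum>a\<le>CARD('x). \<Sum>t\<in>UNIV. \<Sum>b\<le>CARD('x). p (a,b,t) * G t)"
    by (intro sum.cong refl sum.swap)
  also have "\<dots> = (\<Sum>t\<in>UNIV. \<Sum>a\<le>CARD('x). \<Sum>b\<le>CARD('x). p (a,b,t) * G t)"
    by (rule sum.swap)
  also have "\<dots> = (\<Sum>t\<in>UNIV. Q_XUV Q (fst t) (fst (snd t)) (snd (snd t)) * G t)"
  proof (intro sum.cong refl)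
    fix t :: "'x \<times> 'u \<times> 'v"
    obtain x u v where t: "t = (x,u,v)" by (cases t) auto
    have "(\<Sum>a\<le>CARD('x). \<Sum>b\<le>CARD('x). p (a,b,t)) = Q_XUV Q x u v"
      using M t by (simp add: sum.cartesian_product)
    then show "(\<Sum>a\<le>CARD('x). \<Sum>b\<le>CARD('x). p (a,b,t) * G t) = Q_XUV Q (fst t) (fst (snd t)) (snd (snd t)) * G t"
      using t by (simp add: sum_distrib_right[symmetric])
  qed
  also have "\<dots> = (\<Sum>z\<in>UNIV. Q z * G (fst z, fst (snd (snd z)), snd (snd (snd z))))" by (rule QX)
  finally show ?thesis .
qed


lemma Ps_proj:
  fixes \<pi> :: "'z::finite \<Rightarrow> 'x::finite \<times> 's"
  shows "Ps (\<lambda>k. \<Sum>z\<in>{z. \<pi> z = k}. Q z) s = (\<Sum>z\<in>UNIV. if snd (\<pi> z) = s then Q z else 0)"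
proof -
  have "Ps (\<lambda>k. \<Sum>z\<in>{z. \<pi> z = k}. Q z) s = (\<Sum>x\<in>UNIV. \<Sum>z\<in>UNIV. if \<pi> z = (x,s) then Q z else 0)"
    unfolding Ps_def by (simp add: sum.inter_filter[symmetric])
  also have "\<dots> = (\<Sum>z\<in>UNIV. \<Sum>x\<in>UNIV. if \<pi> z = (x,s) then Q z else 0)" by (rule sum.swap)
  also have "\<dots> = (\<Sum>z\<in>UNIV. if snd (\<pi> z) = s then Q z else 0)"
  proof (intro sum.cong refl)
    fix z
    have "(\<Sum>x\<in>UNIV. if \<pi> z = (x,s) then Q z else 0) = (\<Sum>x\<in>UNIV. if x = fst (\<pi> z) then (if snd (\<pi> z) = s then Q z else 0) else 0)"
      by (intro sum.cong refl) (auto simp: prod_eq_iff)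
    also have "\<dots> = (if snd (\<pi> z) = s then Q z else 0)" by simp
    finally show "(\<Sum>x\<in>UNIV. if \<pi> z = (x,s) then Q z else 0) = (if snd (\<pi> z) = s then Q z else 0)" .
  qed
  finally show ?thesis .
qed

context
  fixes Q :: "'x::finite \<times> 'x \<times> 'u::finite \<times> 'v::finite \<Rightarrow> real"
    and p :: "nat \<times> nat \<times> 'x \<times> 'u \<times> 'v \<Rightarrow> real"
  assumes M: "\<forall>x u v. (\<Sum>(a, b)\<in>{..CARD('x)} \<times> {..CARD('x)}. p (a, b, x, u, v)) = Q_XUV Q x u v"
begin

lemma mk_as_sum: "mk D p F w = (\<Sum>w'\<in>D. p w' * (if F w' = F w then 1 else 0))"
  unfolding mk_def marg_def by (intro sum.cong refl) simp

lemma mk_XU: "mk aux_dom p (\<lambda>w. (fX w, fU w)) w = Pu Q (fX w, fU w)"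
proof -
  have "mk aux_dom p (\<lambda>w. (fX w, fU w)) w = (\<Sum>z\<in>UNIV. Q z * (if piu z = (fX w, fU w) then 1 else 0))"
    unfolding mk_as_sum using TL[OF M, of "\<lambda>t. if (fst t, fst (snd t)) = (fX w, fU w) then 1 else 0"]
    by (simp add: piu_def cong: if_cong)
  also have "\<dots> = Pu Q (fX w, fU w)" unfolding Pu_def
    by (simp add: sum.If_cases if_distrib cong: if_cong)
  finally show ?thesis .
qed

lemma mk_U: "mk aux_dom p fU w = Ps (Pu Q) (fU w)"
proof -
  have "mk aux_dom p fU w = (\<Sum>z\<in>UNIV. Q z * (if snd (piu z) = fU w then 1 else 0))"
    unfolding mk_as_sum using TL[OF M, of "\<lambda>t. if fst (snd t) = fU w then 1 else 0"]
    by (simp add: piu_def cong: if_cong)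
  also have "\<dots> = Ps (Pu Q) (fU w)" unfolding Pu_def[abs_def] Ps_proj by (simp add: if_distrib cong: if_cong)
  finally show ?thesis .
qed

lemma mk_XV: "mk aux_dom p (\<lambda>w. (fX w, fV w)) w = Pv Q (fX w, fV w)"
proof -
  have "mk aux_dom p (\<lambda>w. (fX w, fV w)) w = (\<Sum>z\<in>UNIV. Q z * (if piv z = (fX w, fV w) then 1 else 0))"
    unfolding mk_as_sum using TL[OF M, of "\<lambda>t. if (fst t, snd (snd t)) = (fX w, fV w) then 1 else 0"]
    by (simp add: piv_def cong: if_cong)
  also have "\<dots> = Pv Q (fX w, fV w)" unfolding Pv_def
    by (simp add: sum.If_cases if_distrib cong: if_cong)
  finally show ?thesis .
qed

lemma mk_V: "mk aux_dom p fV w = Ps (Pv Q) (fV w)"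
proof -
  have "mk aux_dom p fV w = (\<Sum>z\<in>UNIV. Q z * (if snd (piv z) = fV w then 1 else 0))"
    unfolding mk_as_sum using TL[OF M, of "\<lambda>t. if snd (snd t) = fV w then 1 else 0"]
    by (simp add: piv_def cong: if_cong)
  also have "\<dots> = Ps (Pv Q) (fV w)" unfolding Pv_def[abs_def] Ps_proj by (simp add: if_distrib cong: if_cong)
  finally show ?thesis .
qed

lemma HH_gen:
  fixes \<pi> :: "'x \<times> 'x \<times> 'u \<times> 'v \<Rightarrow> 'x \<times> 's::finite"
  shows "(\<Sum>z\<in>UNIV. Q z * (if (\<Sum>z'\<in>{z'. \<pi> z' = \<pi> z}. Q z') = 0 then 0 else
      log 2 ((\<Sum>z'\<in>{z'. \<pi> z' = \<pi> z}. Q z') / Ps (\<lambda>k. \<Sum>z'\<in>{z'. \<pi> z' = k}. Q z') (snd (\<pi> z)))))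
     = - HH (\<lambda>k. \<Sum>z'\<in>{z'. \<pi> z' = k}. Q z')"
proof -
  define P where "P = (\<lambda>k. \<Sum>z'\<in>{z'. \<pi> z' = k}. Q z')"
  have "(\<Sum>z\<in>UNIV. Q z * (\<lambda>k. if P k = 0 then 0 else log 2 (P k / Ps P (snd k))) (\<pi> z))
     = (\<Sum>k\<in>UNIV. P k * (if P k = 0 then 0 else log 2 (P k / Ps P (snd k))))"
    unfolding P_def by (rule group_sum)
  also have "\<dots> = (\<Sum>k\<in>UNIV. P k * log 2 (P k / Ps P (snd k)))"
    by (intro sum.cong refl) auto
  also have "\<dots> = - HH P" unfolding HH_def gH_def cp_def
    by (simp add: sum_negf[symmetric])
  finally show ?thesis unfolding P_def by simp
qed


lemma fin_aux: "finite (aux_dom :: (nat \<times> nat \<times> 'x \<times> 'u \<times> 'v) set)"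
  unfolding aux_dom_def by simp

lemma HU: "cond_entropy aux_dom p fX fU = HH (Pu Q)"
proof -
  define \<phi> where "\<phi> t = (if Pu Q (fst t, fst (snd t)) = 0 then 0 else
      log 2 (Pu Q (fst t, fst (snd t)) / Ps (Pu Q) (fst (snd t))))" for t :: "'x \<times> 'u \<times> 'v"
  have "cond_entropy aux_dom p fX fU = - (\<Sum>w\<in>aux_dom. p w * \<phi> (fX w, fU w, fV w))"
    unfolding ce_sum[OF fin_aux] mk_XU mk_U \<phi>_def by (simp cong: if_cong)
  also have "\<dots> = - (\<Sum>z\<in>UNIV. Q z * \<phi> (fst z, fst (snd (snd z)), snd (snd (snd z))))"
    by (simp add: TL[OF M])
  also have "\<dots> = HH (Pu Q)"
    using HH_gen[of piu] unfolding \<phi>_def Pu_def[abs_def] by (simp add: piu_def cong: if_cong)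
  finally show ?thesis .
qed

lemma HV: "cond_entropy aux_dom p fX fV = HH (Pv Q)"
proof -
  define \<phi> where "\<phi> t = (if Pv Q (fst t, snd (snd t)) = 0 then 0 else
      log 2 (Pv Q (fst t, snd (snd t)) / Ps (Pv Q) (snd (snd t))))" for t :: "'x \<times> 'u \<times> 'v"
  have "cond_entropy aux_dom p fX fV = - (\<Sum>w\<in>aux_dom. p w * \<phi> (fX w, fU w, fV w))"
    unfolding ce_sum[OF fin_aux] mk_XV mk_V \<phi>_def by (simp cong: if_cong)
  also have "\<dots> = - (\<Sum>z\<in>UNIV. Q z * \<phi> (fst z, fst (snd (snd z)), snd (snd (snd z))))"
    by (simp add: TL[OF M])
  also have "\<dots> = HH (Pv Q)"
    using HH_gen[of piv] unfolding \<phi>_def Pv_def[abs_def] by (simp add: piv_def cong: if_cong)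
  finally show ?thesis .
qed
end


definition Poly :: "('x::finite \<times> 'y::finite \<times> 'u::finite \<times> 'v::finite \<Rightarrow> real) \<Rightarrow> (real \<times> real \<times> real) set" where
  "Poly Q = {(R0, R1, R2). 0 \<le> R0 \<and> 0 \<le> R1 \<and> 0 \<le> R2 \<and> HH (Pu Q) \<le> R0 + R1 \<and> HH (Pv Q) \<le> R0 + R2}"

lemma fun_eqs:
  "(\<lambda>(a::nat, b::nat, x, u, v). x) = fX" "(\<lambda>(a::nat, b::nat, x, u, v). a) = fA"
  "(\<lambda>(a::nat, b::nat, x, u, v). b) = fB" "(\<lambda>(a::nat, b::nat, x, u, v). u) = fU"
  "(\<lambda>(a::nat, b::nat, x, u, v). v) = fV"
  "(\<lambda>(a::nat, b::nat, x, u, v). (a, u)) = (\<lambda>w. (fA w, fU w))"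
  "(\<lambda>(a::nat, b::nat, x, u, v). (b, v)) = (\<lambda>w. (fB w, fV w))"
  by (auto simp: fun_eq_iff fX_def fA_def fB_def fU_def fV_def)

lemma T3:
  fixes Q :: "'x::finite \<times> 'x \<times> 'u::finite \<times> 'v::finite \<Rightarrow> real"
  assumes "p \<in> Pstar Q"
  shows "Rstar p \<subseteq> Poly Q"
proof
  fix R assume R: "R \<in> Rstar p"
  have pnn: "\<And>w. p w \<ge> 0" and M: "\<forall>x u v. (\<Sum>(a, b)\<in>{..CARD('x)} \<times> {..CARD('x)}. p (a, b, x, u, v)) = Q_XUV Q x u v"
    using assms unfolding Pstar_def by auto
  interpret fd aux_dom p by unfold_locales (auto simp: pnn aux_dom_def)
  obtain R0 R1 R2 where R': "R = (R0,R1,R2)" by (cases R) auto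
  have h: "R0 \<ge> cond_entropy aux_dom p fX (\<lambda>w. (fA w, fU w))" "R0 \<ge> cond_entropy aux_dom p fX (\<lambda>w. (fB w, fV w))"
    "R1 \<ge> cond_mutual_info aux_dom p fX fA fU" "R2 \<ge> cond_mutual_info aux_dom p fX fB fV"
    using R unfolding R' Rstar_def fun_eqs by auto
  have c1: "cond_entropy aux_dom p fX (\<lambda>w. (fA w, fU w)) + cond_mutual_info aux_dom p fX fA fU = HH (Pu Q)"
    using chain[of fX fA fU] HU[OF M] by simp
  have c2: "cond_entropy aux_dom p fX (\<lambda>w. (fB w, fV w)) + cond_mutual_info aux_dom p fX fB fV = HH (Pv Q)"
    using chain[of fX fB fV] HV[OF M] by simp
  have n: "cond_entropy aux_dom p fX (\<lambda>w. (fA w, fU w)) \<ge> 0" "cond_mutual_info aux_dom p fX fA fU \<ge> 0"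
     "cond_mutual_info aux_dom p fX fB fV \<ge> 0"
    using ce_nonneg cmi_nonneg by auto
  show "R \<in> Poly Q" unfolding R' Poly_def using h c1 c2 n by auto
qed


definition kk :: "real \<Rightarrow> nat \<Rightarrow> nat \<Rightarrow> real" where
  "kk l e a = (if a = e then l else if a = 0 then 1 - l else 0)"

lemma SW: "sum G (aux_dom :: (nat \<times> nat \<times> 'x::finite \<times> 'u::finite \<times> 'v::finite) set) =
     (\<Sum>t\<in>UNIV. \<Sum>a\<le>CARD('x). \<Sum>b\<le>CARD('x). G (a,b,t))"
proof -
  have "sum G (aux_dom :: (nat \<times> nat \<times> 'x \<times> 'u \<times> 'v) set) = (\<Sum>a\<le>CARD('x). \<Sum>b\<le>CARD('x). \<Sum>t\<in>UNIV. G (a,b,t))"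
    by (rule sum_aux_dom)
  also have "\<dots> = (\<Sum>a\<le>CARD('x). \<Sum>t\<in>UNIV. \<Sum>b\<le>CARD('x). G (a,b,t))"
    by (intro sum.cong refl sum.swap)
  also have "\<dots> = (\<Sum>t\<in>UNIV. \<Sum>a\<le>CARD('x). \<Sum>b\<le>CARD('x). G (a,b,t))" by (rule sum.swap)
  finally show ?thesis .
qed

lemma kk_nonneg: "0 \<le> l \<Longrightarrow> l \<le> 1 \<Longrightarrow> kk l e a \<ge> 0" by (simp add: kk_def)

lemma kk_sum: assumes "1 \<le> e" "e \<le> N" shows "(\<Sum>a\<le>N. kk l e a) = 1"
proof -
  have "(\<Sum>a\<le>N. kk l e a) = (\<Sum>a\<le>N. (if a = e then l else 0) + (if a = 0 then 1 - l else 0))"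
    using assms by (intro sum.cong refl) (auto simp: kk_def)
  also have "\<dots> = 1" using assms by (simp add: sum.distrib)
  finally show ?thesis .
qed

lemma kk_0: "1 \<le> e \<Longrightarrow> kk l e 0 = 1 - l" by (simp add: kk_def)

context
  fixes Q :: "'x::finite \<times> 'x \<times> 'u::finite \<times> 'v::finite \<Rightarrow> real"
    and enc :: "'x \<Rightarrow> nat" and l1 l2 :: real
  assumes Qnn: "\<And>z. Q z \<ge> 0" and enc_inj: "inj enc" and enc_rng: "\<And>x. enc x \<in> {1..CARD('x)}"
    and l1: "0 \<le> l1" "l1 \<le> 1" and l2: "0 \<le> l2" "l2 \<le> 1"
begin

definition pE :: "nat \<times> nat \<times> 'x \<times> 'u \<times> 'v \<Rightarrow> real" where
  "pE w = (if fst w \<le> CARD('x) \<and> fst (snd w) \<le> CARD('x) then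
      kk l1 (enc (fst (snd (snd w)))) (fst w) * kk l2 (enc (fst (snd (snd w)))) (fst (snd w)) *
      Q_XUV Q (fst (snd (snd w))) (fst (snd (snd (snd w)))) (snd (snd (snd (snd w)))) else 0)"

lemma QXUV_nn: "Q_XUV Q x u v \<ge> 0" unfolding Q_XUV_def using Qnn by (simp add: sum_nonneg)

lemma pE_nn: "pE w \<ge> 0"
  unfolding pE_def using kk_nonneg[OF l1] kk_nonneg[OF l2] QXUV_nn by simp

lemma enc1: "1 \<le> enc x" "enc x \<le> CARD('x)" using enc_rng[of x] by auto

lemma pE_ab: "(\<Sum>a\<le>CARD('x). \<Sum>b\<le>CARD('x). pE (a,b,x,u,v)) = Q_XUV Q x u v"
proof -
  have "(\<Sum>a\<le>CARD('x). \<Sum>b\<le>CARD('x). pE (a,b,x,u,v)) =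
     (\<Sum>a\<le>CARD('x). kk l1 (enc x) a * (\<Sum>b\<le>CARD('x). kk l2 (enc x) b * Q_XUV Q x u v))"
    by (simp add: pE_def sum_distrib_left mult.assoc)
  also have "\<dots> = (\<Sum>a\<le>CARD('x). kk l1 (enc x) a * Q_XUV Q x u v)"
    by (simp add: sum_distrib_right[symmetric] kk_sum[OF enc1])
  also have "\<dots> = Q_XUV Q x u v" by (simp add: sum_distrib_right[symmetric] kk_sum[OF enc1])
  finally show ?thesis .
qed

lemma pE_0b: "(\<Sum>b\<le>CARD('x). pE (0,b,x,u,v)) = (1 - l1) * Q_XUV Q x u v"
proof -
  have "(\<Sum>b\<le>CARD('x). pE (0,b,x,u,v)) = kk l1 (enc x) 0 * (\<Sum>b\<le>CARD('x). kk l2 (enc x) b * Q_XUV Q x u v)"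
    by (simp add: pE_def sum_distrib_left mult.assoc)
  also have "\<dots> = (1 - l1) * Q_XUV Q x u v"
    by (simp add: sum_distrib_right[symmetric] kk_sum[OF enc1] kk_0[OF enc1(1)])
  finally show ?thesis .
qed

lemma pE_a0: "(\<Sum>a\<le>CARD('x). pE (a,0,x,u,v)) = (1 - l2) * Q_XUV Q x u v"
proof -
  have "(\<Sum>a\<le>CARD('x). pE (a,0,x,u,v)) = (\<Sum>a\<le>CARD('x). kk l1 (enc x) a * Q_XUV Q x u v) * kk l2 (enc x) 0"
    unfolding sum_distrib_right by (intro sum.cong refl) (simp add: pE_def)
  also have "\<dots> = (1 - l2) * Q_XUV Q x u v"
    by (simp add: sum_distrib_right[symmetric] kk_sum[OF enc1] kk_0[OF enc1(1)])
  finally show ?thesis .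
qed

lemma pE_M: "\<forall>x u v. (\<Sum>(a, b)\<in>{..CARD('x)} \<times> {..CARD('x)}. pE (a, b, x, u, v)) = Q_XUV Q x u v"
  using pE_ab by (simp add: sum.cartesian_product[symmetric])


lemma marg_SW: "marg (aux_dom :: (nat \<times> nat \<times> 'x \<times> 'u \<times> 'v) set) p F k =
   (\<Sum>t\<in>UNIV. \<Sum>a\<le>CARD('x). \<Sum>b\<le>CARD('x). if F (a,b,t) = k then p (a,b,t) else 0)"
  unfolding marg_def by (rule SW)

definition SX :: "'x \<Rightarrow> real" where "SX x = (\<Sum>t\<in>UNIV. if fst t = x then Q_XUV Q (fst t) (fst (snd t)) (snd (snd t)) else 0)"

lemma mX: "marg aux_dom pE (\<lambda>(a, b, x, u, v). x) x = SX x"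
  unfolding marg_SW SX_def
proof (intro sum.cong refl)
  fix t :: "'x \<times> 'u \<times> 'v"
  obtain x' u' v' where t: "t = (x',u',v')" by (cases t) auto
  show "(\<Sum>a\<le>CARD('x). \<Sum>b\<le>CARD('x). if (case (a, b, t) of (a, b, x, u, v) \<Rightarrow> x) = x then pE (a, b, t) else 0) =
    (if fst t = x then Q_XUV Q (fst t) (fst (snd t)) (snd (snd t)) else 0)"
    using pE_ab by (simp add: t)
qed

lemma mXUV: "marg aux_dom pE (\<lambda>(a, b, x, u, v). (x, u, v)) (x, u, v) = Q_XUV Q x u v"
proof -
  have "marg aux_dom pE (\<lambda>(a, b, x, u, v). (x, u, v)) (x, u, v) =
     (\<Sum>t\<in>UNIV. if t = (x,u,v) then (\<Sum>a\<le>CARD('x). \<Sum>b\<le>CARD('x). pE (a,b,t)) else 0)"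
    unfolding marg_SW by (intro sum.cong refl) auto
  also have "\<dots> = Q_XUV Q x u v" using pE_ab by simp
  finally show ?thesis .
qed

lemma mABX: "marg aux_dom pE (\<lambda>(a, b, x, u, v). (a, b, x)) (a, b, x) =
   (if a \<le> CARD('x) \<and> b \<le> CARD('x) then kk l1 (enc x) a * kk l2 (enc x) b * SX x else 0)"
proof -
  have "marg aux_dom pE (\<lambda>(a, b, x, u, v). (a, b, x)) (a, b, x) =
     (\<Sum>t\<in>UNIV. if a \<le> CARD('x) \<and> b \<le> CARD('x) \<and> fst t = x then pE (a,b,t) else 0)"
    unfolding marg_SW
  proof (intro sum.cong refl)
    fix t :: "'x \<times> 'u \<times> 'v"
    have "(\<Sum>a'\<le>CARD('x). \<Sum>b'\<le>CARD('x). if (case (a', b', t) of (a, b, x, u, v) \<Rightarrow> (a, b, x)) = (a, b, x) then pE (a', b', t) else 0)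
       = (\<Sum>a'\<le>CARD('x). if a' = a then (\<Sum>b'\<le>CARD('x). if b' = b then (if fst t = x then pE (a', b', t) else 0) else 0) else 0)"
      by (intro sum.cong refl) (auto simp: split_beta)
    also have "\<dots> = (if a \<le> CARD('x) \<and> b \<le> CARD('x) \<and> fst t = x then pE (a,b,t) else 0)"
      by simp
    finally show "(\<Sum>a'\<le>CARD('x). \<Sum>b'\<le>CARD('x). if (case (a', b', t) of (a, b, x, u, v) \<Rightarrow> (a, b, x)) = (a, b, x) then pE (a', b', t) else 0)
       = (if a \<le> CARD('x) \<and> b \<le> CARD('x) \<and> fst t = x then pE (a,b,t) else 0)" .
  qed
  also have "\<dots> = (if a \<le> CARD('x) \<and> b \<le> CARD('x) then kk l1 (enc x) a * kk l2 (enc x) b * SX x else 0)"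
    unfolding SX_def by (auto simp: sum_distrib_left pE_def intro!: sum.cong)
  finally show ?thesis .
qed

lemma pE_Pstar: "pE \<in> Pstar Q"
  unfolding Pstar_def
proof (intro CollectI conjI allI impI)
  show "\<And>w. 0 \<le> pE w" by (rule pE_nn)
  show "\<And>w. w \<notin> aux_dom \<Longrightarrow> pE w = 0" by (auto simp: aux_dom_def pE_def)
  show "\<And>x u v. (\<Sum>(a, b)\<in>{..CARD('x)} \<times> {..CARD('x)}. pE (a, b, x, u, v)) = Q_XUV Q x u v"
    using pE_M by blast
  fix a b x u v
  show "pE (a, b, x, u, v) * marg aux_dom pE (\<lambda>(a, b, x, u, v). x) x =
          marg aux_dom pE (\<lambda>(a, b, x, u, v). (a, b, x)) (a, b, x) *
          marg aux_dom pE (\<lambda>(a, b, x, u, v). (x, u, v)) (x, u, v)"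
    unfolding mX mXUV mABX by (simp add: pE_def)
qed

lemma A0: "(\<Sum>w\<in>aux_dom. pE w * (if fA w = 0 then G (fX w, fU w, fV w) else 0)) =
   (1 - l1) * (\<Sum>z\<in>UNIV. Q z * G (fst z, fst (snd (snd z)), snd (snd (snd z))))"
proof -
  have "(\<Sum>w\<in>aux_dom. pE w * (if fA w = 0 then G (fX w, fU w, fV w) else 0)) =
     (\<Sum>t\<in>UNIV. \<Sum>a\<le>CARD('x). \<Sum>b\<le>CARD('x). pE (a,b,t) * (if a = 0 then G t else 0))"
    unfolding SW by (simp add: fA_def fX_def fU_def fV_def split_beta cong: if_cong)
  also have "\<dots> = (\<Sum>t\<in>UNIV. \<Sum>a\<le>CARD('x). if a = 0 then (\<Sum>b\<le>CARD('x). pE (0,b,t) * G t) else 0)"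
    by (intro sum.cong refl) auto
  also have "\<dots> = (\<Sum>t\<in>UNIV. (\<Sum>b\<le>CARD('x). pE (0,b,t)) * G t)"
    by (simp add: sum_distrib_right)
  also have "\<dots> = (\<Sum>t\<in>UNIV. (1 - l1) * (Q_XUV Q (fst t) (fst (snd t)) (snd (snd t)) * G t))"
    by (intro sum.cong refl) (auto simp: pE_0b split_beta)
  also have "\<dots> = (1 - l1) * (\<Sum>z\<in>UNIV. Q z * G (fst z, fst (snd (snd z)), snd (snd (snd z))))"
    by (simp add: sum_distrib_left[symmetric] QX)
  finally show ?thesis .
qed

lemma B0: "(\<Sum>w\<in>aux_dom. pE w * (if fB w = 0 then G (fX w, fU w, fV w) else 0)) =
   (1 - l2) * (\<Sum>z\<in>UNIV. Q z * G (fst z, fst (snd (snd z)), snd (snd (snd z))))"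
proof -
  have "(\<Sum>w\<in>aux_dom. pE w * (if fB w = 0 then G (fX w, fU w, fV w) else 0)) =
     (\<Sum>t\<in>UNIV. \<Sum>a\<le>CARD('x). \<Sum>b\<le>CARD('x). pE (a,b,t) * (if b = 0 then G t else 0))"
    unfolding SW by (simp add: fB_def fX_def fU_def fV_def split_beta cong: if_cong)
  also have "\<dots> = (\<Sum>t\<in>UNIV. \<Sum>a\<le>CARD('x). pE (a,0,t) * G t)"
    by (intro sum.cong refl) (simp add: if_distrib cong: if_cong)
  also have "\<dots> = (\<Sum>t\<in>UNIV. (\<Sum>a\<le>CARD('x). pE (a,0,t)) * G t)"
    by (simp add: sum_distrib_right)
  also have "\<dots> = (\<Sum>t\<in>UNIV. (1 - l2) * (Q_XUV Q (fst t) (fst (snd t)) (snd (snd t)) * G t))"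
    by (intro sum.cong refl) (auto simp: pE_a0 split_beta)
  also have "\<dots> = (1 - l2) * (\<Sum>z\<in>UNIV. Q z * G (fst z, fst (snd (snd z)), snd (snd (snd z))))"
    by (simp add: sum_distrib_left[symmetric] QX)
  finally show ?thesis .
qed

lemma kk_nz: "kk l e a \<noteq> 0 \<Longrightarrow> a = e \<or> a = 0" by (auto simp: kk_def split: if_splits)

lemma pE_nz: "pE (a,b,x,u,v) \<noteq> 0 \<Longrightarrow> a \<le> CARD('x) \<and> b \<le> CARD('x) \<and> kk l1 (enc x) a \<noteq> 0 \<and> kk l2 (enc x) b \<noteq> 0"
  by (auto simp: pE_def split: if_splits)

lemma mk_sum1: "mk D p F w = (\<Sum>w'\<in>D. p w' * (if F w' = F w then 1 else 0))"
  unfolding mk_def marg_def by (intro sum.cong refl) simp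

lemma Pu_sum: "(\<Sum>z\<in>UNIV. Q z * (if piu z = k then 1 else 0)) = Pu Q k"
  unfolding Pu_def by (simp add: sum.If_cases if_distrib cong: if_cong)
lemma Pv_sum: "(\<Sum>z\<in>UNIV. Q z * (if piv z = k then 1 else 0)) = Pv Q k"
  unfolding Pv_def by (simp add: sum.If_cases if_distrib cong: if_cong)
lemma Psu_sum: "(\<Sum>z\<in>UNIV. Q z * (if snd (piu z) = s then 1 else 0)) = Ps (Pu Q) s"
  unfolding Pu_def[abs_def] Ps_proj by (simp add: if_distrib cong: if_cong)
lemma Psv_sum: "(\<Sum>z\<in>UNIV. Q z * (if snd (piv z) = s then 1 else 0)) = Ps (Pv Q) s"
  unfolding Pv_def[abs_def] Ps_proj by (simp add: if_distrib cong: if_cong)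

lemma HA: "cond_entropy aux_dom pE fX (\<lambda>w. (fA w, fU w)) = (1 - l1) * HH (Pu Q)"
proof -
  interpret fd aux_dom pE by unfold_locales (auto simp: pE_nn aux_dom_def)
  define m1 where "m1 = mk aux_dom pE (\<lambda>w. (fX w, fA w, fU w))"
  define m2 where "m2 = mk aux_dom pE (\<lambda>w. (fA w, fU w))"
  define \<psi> where "\<psi> t = (if Pu Q (fst t, fst (snd t)) = 0 then 0 else
      log 2 (Pu Q (fst t, fst (snd t)) / Ps (Pu Q) (fst (snd t))))" for t :: "'x \<times> 'u \<times> 'v"
  have pt: "pE w * (if m1 w = 0 then 0 else log 2 (m1 w / m2 w)) =
            pE w * (if fA w = 0 then \<psi> (fX w, fU w, fV w) else 0)" if wD: "w \<in> aux_dom" for w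
  proof (cases "pE w = 0")
    case False
    obtain a b x u v where w: "w = (a,b,x,u,v)" by (cases w) auto
    have pw: "pE w > 0" using False pE_nn[of w] by simp
    have nz: "kk l1 (enc x) a \<noteq> 0" using pE_nz[of a b x u v] False w by auto
    have m1pos: "m1 w > 0" unfolding m1_def using mk_ge[OF wD, of "\<lambda>w. (fX w, fA w, fU w)"] pw by linarith
    show ?thesis
    proof (cases "a = 0")
      case True
      define G1 where "G1 t = (if (fst t, fst (snd t)) = (x,u) then 1 else (0::real))" for t :: "'x \<times> 'u \<times> 'v"
      define G2 where "G2 t = (if fst (snd t) = u then 1 else (0::real))" for t :: "'x \<times> 'u \<times> 'v"
      have "m1 w = (\<Sum>w'\<in>aux_dom. pE w' * (if fA w' = 0 then G1 (fX w', fU w', fV w') else 0))"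
        unfolding m1_def mk_sum1 using True w
        by (intro sum.cong refl) (auto simp: fA_def fX_def fU_def fV_def G1_def split_beta)
      also have "\<dots> = (1 - l1) * Pu Q (x,u)"
        unfolding A0[of G1] using Pu_sum[of "(x,u)"] by (simp add: piu_def G1_def)
      finally have m1e: "m1 w = (1 - l1) * Pu Q (x,u)" .
      have "m2 w = (\<Sum>w'\<in>aux_dom. pE w' * (if fA w' = 0 then G2 (fX w', fU w', fV w') else 0))"
        unfolding m2_def mk_sum1 using True w
        by (intro sum.cong refl) (auto simp: fA_def fX_def fU_def fV_def G2_def split_beta)
      also have "\<dots> = (1 - l1) * Ps (Pu Q) u"
        unfolding A0[of G2] using Psu_sum[of u] by (simp add: piu_def G2_def)
      finally have m2e: "m2 w = (1 - l1) * Ps (Pu Q) u" .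
      have "1 - l1 \<noteq> 0" "Pu Q (x,u) \<noteq> 0" using m1pos m1e by auto
      then show ?thesis using True w m1e m2e m1pos \<psi>_def by (simp add: fA_def fX_def fU_def fV_def)
    next
      case False
      then have aenc: "a = enc x" using kk_nz[OF nz] by auto
      have "m1 w = m2 w" unfolding m1_def m2_def mk_sum1
      proof (intro sum.cong refl)
        fix w' :: "nat \<times> nat \<times> 'x \<times> 'u \<times> 'v" assume "w' \<in> aux_dom"
        show "pE w' * (if (fX w', fA w', fU w') = (fX w, fA w, fU w) then 1 else 0) =
              pE w' * (if (fA w', fU w') = (fA w, fU w) then 1 else 0)"
        proof (cases "pE w' = 0")
          case False2: False
          obtain a' b' x' u' v' where w': "w' = (a',b',x',u',v')" by (cases w') auto
          have "kk l1 (enc x') a' \<noteq> 0" using pE_nz[of a' b' x' u' v'] False2 w' by auto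
          then have "a' = enc x' \<or> a' = 0" by (rule kk_nz)
          then have "a' = a \<Longrightarrow> x' = x" using False aenc enc_inj by (auto dest: injD)
          then show ?thesis using w w' by (auto simp: fA_def fX_def fU_def)
        qed simp
      qed
      then show ?thesis using m1pos False w by (simp add: fA_def)
    qed
  qed simp
  have "cond_entropy aux_dom pE fX (\<lambda>w. (fA w, fU w)) = - (\<Sum>w\<in>aux_dom. pE w * (if fA w = 0 then \<psi> (fX w, fU w, fV w) else 0))"
  proof -
    have "(\<Sum>w\<in>aux_dom. pE w * (if m1 w = 0 then 0 else log 2 (m1 w / m2 w))) =
          (\<Sum>w\<in>aux_dom. pE w * (if fA w = 0 then \<psi> (fX w, fU w, fV w) else 0))"
      by (rule sum.cong[OF refl]) (rule pt)
    then show ?thesis unfolding ce_sum[OF finD] m1_def[symmetric] m2_def[symmetric] by simp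
  qed
  also have "\<dots> = - ((1 - l1) * (\<Sum>z\<in>UNIV. Q z * \<psi> (fst z, fst (snd (snd z)), snd (snd (snd z)))))"
    by (simp add: A0)
  also have "\<dots> = (1 - l1) * HH (Pu Q)"
    using HH_gen[OF pE_M, of piu] unfolding \<psi>_def Pu_def[abs_def] by (simp add: piu_def cong: if_cong)
  finally show ?thesis .
qed
lemma HB: "cond_entropy aux_dom pE fX (\<lambda>w. (fB w, fV w)) = (1 - l2) * HH (Pv Q)"
proof -
  interpret fd aux_dom pE by unfold_locales (auto simp: pE_nn aux_dom_def)
  define m1 where "m1 = mk aux_dom pE (\<lambda>w. (fX w, fB w, fV w))"
  define m2 where "m2 = mk aux_dom pE (\<lambda>w. (fB w, fV w))"
  define \<psi> where "\<psi> t = (if Pv Q (fst t, snd (snd t)) = 0 then 0 else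
      log 2 (Pv Q (fst t, snd (snd t)) / Ps (Pv Q) (snd (snd t))))" for t :: "'x \<times> 'u \<times> 'v"
  have pt: "pE w * (if m1 w = 0 then 0 else log 2 (m1 w / m2 w)) =
            pE w * (if fB w = 0 then \<psi> (fX w, fU w, fV w) else 0)" if wD: "w \<in> aux_dom" for w
  proof (cases "pE w = 0")
    case False
    obtain a b x u v where w: "w = (a,b,x,u,v)" by (cases w) auto
    have pw: "pE w > 0" using False pE_nn[of w] by simp
    have nz: "kk l2 (enc x) b \<noteq> 0" using pE_nz[of a b x u v] False w by auto
    have m1pos: "m1 w > 0" unfolding m1_def using mk_ge[OF wD, of "\<lambda>w. (fX w, fB w, fV w)"] pw by linarith
    show ?thesis
    proof (cases "b = 0")
      case True
      define G1 where "G1 t = (if (fst t, snd (snd t)) = (x,v) then 1 else (0::real))" for t :: "'x \<times> 'u \<times> 'v"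
      define G2 where "G2 t = (if snd (snd t) = v then 1 else (0::real))" for t :: "'x \<times> 'u \<times> 'v"
      have "m1 w = (\<Sum>w'\<in>aux_dom. pE w' * (if fB w' = 0 then G1 (fX w', fU w', fV w') else 0))"
        unfolding m1_def mk_sum1 using True w
        by (intro sum.cong refl) (auto simp: fB_def fX_def fV_def fV_def G1_def split_beta)
      also have "\<dots> = (1 - l2) * Pv Q (x,v)"
        unfolding B0[of G1] using Pv_sum[of "(x,v)"] by (simp add: piv_def G1_def)
      finally have m1e: "m1 w = (1 - l2) * Pv Q (x,v)" .
      have "m2 w = (\<Sum>w'\<in>aux_dom. pE w' * (if fB w' = 0 then G2 (fX w', fU w', fV w') else 0))"
        unfolding m2_def mk_sum1 using True w
        by (intro sum.cong refl) (auto simp: fB_def fX_def fV_def fV_def G2_def split_beta)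
      also have "\<dots> = (1 - l2) * Ps (Pv Q) v"
        unfolding B0[of G2] using Psv_sum[of v] by (simp add: piv_def G2_def)
      finally have m2e: "m2 w = (1 - l2) * Ps (Pv Q) v" .
      have "1 - l2 \<noteq> 0" "Pv Q (x,v) \<noteq> 0" using m1pos m1e by auto
      then show ?thesis using True w m1e m2e m1pos \<psi>_def by (simp add: fB_def fX_def fV_def fV_def)
    next
      case False
      then have benc: "b = enc x" using kk_nz[OF nz] by auto
      have "m1 w = m2 w" unfolding m1_def m2_def mk_sum1
      proof (intro sum.cong refl)
        fix w' :: "nat \<times> nat \<times> 'x \<times> 'u \<times> 'v" assume "w' \<in> aux_dom"
        show "pE w' * (if (fX w', fB w', fV w') = (fX w, fB w, fV w) then 1 else 0) =
              pE w' * (if (fB w', fV w') = (fB w, fV w) then 1 else 0)"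
        proof (cases "pE w' = 0")
          case False2: False
          obtain a' b' x' u' v' where w': "w' = (a',b',x',u',v')" by (cases w') auto
          have "kk l2 (enc x') b' \<noteq> 0" using pE_nz[of a' b' x' u' v'] False2 w' by auto
          then have "b' = enc x' \<or> b' = 0" by (rule kk_nz)
          then have "b' = b \<Longrightarrow> x' = x" using False benc enc_inj by (auto dest: injD)
          then show ?thesis using w w' by (auto simp: fB_def fX_def fV_def)
        qed simp
      qed
      then show ?thesis using m1pos False w by (simp add: fB_def)
    qed
  qed simp
  have "cond_entropy aux_dom pE fX (\<lambda>w. (fB w, fV w)) = - (\<Sum>w\<in>aux_dom. pE w * (if fB w = 0 then \<psi> (fX w, fU w, fV w) else 0))"
  proof -
    have "(\<Sum>w\<in>aux_dom. pE w * (if m1 w = 0 then 0 else log 2 (m1 w / m2 w))) =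
          (\<Sum>w\<in>aux_dom. pE w * (if fB w = 0 then \<psi> (fX w, fU w, fV w) else 0))"
      by (rule sum.cong[OF refl]) (rule pt)
    then show ?thesis unfolding ce_sum[OF finD] m1_def[symmetric] m2_def[symmetric] by simp
  qed
  also have "\<dots> = - ((1 - l2) * (\<Sum>z\<in>UNIV. Q z * \<psi> (fst z, fst (snd (snd z)), snd (snd (snd z)))))"
    by (simp add: B0)
  also have "\<dots> = (1 - l2) * HH (Pv Q)"
    using HH_gen[OF pE_M, of piv] unfolding \<psi>_def Pv_def[abs_def] by (simp add: piv_def cong: if_cong)
  finally show ?thesis .
qed
end

lemma lam_choice:
  fixes R0 R1 H :: real
  assumes "0 \<le> R0" "0 \<le> R1" "0 \<le> H" "H \<le> R0 + R1"
  defines "l \<equiv> (if H = 0 then 0 else min 1 (R1 / H))"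
  shows "0 \<le> l" "l \<le> 1" "(1 - l) * H \<le> R0" "l * H \<le> R1"
proof -
  show "0 \<le> l" "l \<le> 1" using assms by (auto simp: l_def)
  show "(1 - l) * H \<le> R0"
  proof (cases "H = 0")
    case False
    then have H: "H > 0" using assms by simp
    show ?thesis
    proof (cases "R1 / H \<le> 1")
      case True
      then have "l = R1 / H" using False by (simp add: l_def)
      then show ?thesis using H assms by (simp add: field_simps)
    next
      case False
      then show ?thesis using H assms \<open>H \<noteq> 0\<close> by (simp add: l_def)
    qed
  qed (use assms in \<open>simp add: l_def\<close>)
  show "l * H \<le> R1"
  proof (cases "H = 0")
    case False
    then have H: "H > 0" using assms by simp
    have "min 1 (R1 / H) * H \<le> (R1 / H) * H" using H by (intro mult_right_mono) auto
    then show ?thesis using False H by (simp add: l_def)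
  qed (use assms in \<open>simp add: l_def\<close>)
qed

lemma Pu_pw: fixes Q :: "'x::finite \<times> 'y::finite \<times> 'u::finite \<times> 'v::finite \<Rightarrow> real"
  assumes "\<And>z. Q z \<ge> 0" "sum Q UNIV = 1" shows "pw (Pu Q)" "pw (Pv Q)"
proof -
  have "sum (Pu Q) UNIV = 1" using group_sum[of Q "\<lambda>_. 1" piu] assms(2) by (simp add: Pu_def[abs_def])
  moreover have "sum (Pv Q) UNIV = 1" using group_sum[of Q "\<lambda>_. 1" piv] assms(2) by (simp add: Pv_def[abs_def])
  moreover have "\<And>w. Pu Q w \<ge> 0" "\<And>w. Pv Q w \<ge> 0" using assms(1) by (auto simp: Pu_def Pv_def intro: sum_nonneg)
  ultimately show "pw (Pu Q)" "pw (Pv Q)" by (auto simp: pw_def)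
qed

lemma T4:
  fixes Q :: "'x::finite \<times> 'x \<times> 'u::finite \<times> 'v::finite \<Rightarrow> real"
  assumes Qnn: "\<And>z. Q z \<ge> 0" and tot: "sum Q UNIV = 1" and R: "R \<in> Poly Q"
  shows "\<exists>p\<in>Pstar Q. R \<in> Rstar p"
proof -
  obtain enc :: "'x \<Rightarrow> nat" where bij: "bij_betw enc UNIV {1..CARD('x)}"
    using finite_same_card_bij[of "UNIV :: 'x set" "{1..CARD('x)}"] by auto
  have inj: "inj enc" and rng: "\<And>x. enc x \<in> {1..CARD('x)}"
    using bij by (auto simp: bij_betw_def)
  obtain R0 R1 R2 where R': "R = (R0,R1,R2)" by (cases R) auto
  define Hu where "Hu = HH (Pu Q)"
  define Hv where "Hv = HH (Pv Q)"
  have Hnn: "Hu \<ge> 0" "Hv \<ge> 0" unfolding Hu_def Hv_def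
    using pw.HH_nonneg[OF Pu_pw(1)[OF Qnn tot]] pw.HH_nonneg[OF Pu_pw(2)[OF Qnn tot]] by auto
  have Rc: "0 \<le> R0" "0 \<le> R1" "0 \<le> R2" "Hu \<le> R0 + R1" "Hv \<le> R0 + R2"
    using R unfolding R' Poly_def Hu_def Hv_def by auto
  define l1 where "l1 = (if Hu = 0 then 0 else min 1 (R1 / Hu))"
  define l2 where "l2 = (if Hv = 0 then 0 else min 1 (R2 / Hv))"
  note L1 = lam_choice[OF Rc(1,2) Hnn(1) Rc(4), folded l1_def]
  note L2 = lam_choice[OF Rc(1,3) Hnn(2) Rc(5), folded l2_def]
  define p where "p = pE Q enc l1 l2"
  have pP: "p \<in> Pstar Q" unfolding p_def by (rule pE_Pstar[OF Qnn inj rng L1(1,2) L2(1,2)])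
  have M: "\<forall>x u v. (\<Sum>(a, b)\<in>{..CARD('x)} \<times> {..CARD('x)}. p (a, b, x, u, v)) = Q_XUV Q x u v"
    unfolding p_def by (rule pE_M[OF Qnn inj rng L1(1,2) L2(1,2)])
  have pnn: "\<And>w. p w \<ge> 0" using pP unfolding Pstar_def by auto
  interpret fd aux_dom p by unfold_locales (auto simp: pnn aux_dom_def)
  have hA: "cond_entropy aux_dom p fX (\<lambda>w. (fA w, fU w)) = (1 - l1) * Hu"
    unfolding p_def Hu_def by (rule HA[OF Qnn inj rng L1(1,2) L2(1,2)])
  have hB: "cond_entropy aux_dom p fX (\<lambda>w. (fB w, fV w)) = (1 - l2) * Hv"
    unfolding p_def Hv_def by (rule HB[OF Qnn inj rng L1(1,2) L2(1,2)])
  have iA: "cond_mutual_info aux_dom p fX fA fU = l1 * Hu"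
    using chain[of fX fA fU] HU[OF M] hA by (simp add: Hu_def algebra_simps)
  have iB: "cond_mutual_info aux_dom p fX fB fV = l2 * Hv"
    using chain[of fX fB fV] HV[OF M] hB by (simp add: Hv_def algebra_simps)
  have "R \<in> Rstar p" unfolding R' Rstar_def fun_eqs using hA hB iA iB L1 L2 by auto
  then show ?thesis using pP by blast
qed


lemma bp_sum: "block_prob Q n E = (\<Sum>zs\<in>L n. prod_list (map Q zs) * (if E zs then 1 else 0))"
  unfolding block_prob_def L_def by (intro sum.cong refl) auto

lemma bp_mono:
  fixes Q :: "'z::finite \<Rightarrow> real"
  assumes Qnn: "\<And>z. Q z \<ge> 0"
    and "\<And>zs. length zs = n \<Longrightarrow> (\<forall>z\<in>set zs. Q z \<noteq> 0) \<Longrightarrow> E zs \<Longrightarrow> E' zs"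
  shows "block_prob Q n E \<le> block_prob Q n E'"
  unfolding bp_sum
proof (rule sum_mono)
  fix zs :: "'z list" assume zs: "zs \<in> L n"
  show "prod_list (map Q zs) * (if E zs then 1 else 0) \<le> prod_list (map Q zs) * (if E' zs then 1 else 0)"
  proof (cases "prod_list (map Q zs) = 0")
    case False
    then have "\<forall>z\<in>set zs. Q z \<noteq> 0" by (auto simp: prod_list_zero_iff)
    then show ?thesis using assms(2)[of zs] zs prod_nonneg_map[of Q zs, OF Qnn] by (auto simp: L_def)
  qed simp
qed

lemma bp_marg:
  fixes Q :: "'z::finite \<Rightarrow> real" and \<pi> :: "'z \<Rightarrow> 'w::finite"
  shows "block_prob Q n (\<lambda>zs. G (map \<pi> zs)) =
    (\<Sum>ws\<in>L n. prod_list (map (\<lambda>w. \<Sum>z\<in>{z. \<pi> z = w}. Q z) ws) * (if G ws then 1 else 0))"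
  unfolding bp_sum using marg_list[of Q "\<lambda>ws. if G ws then 1 else 0" \<pi> n] by simp

lemma bp_compl:
  assumes "sum Q UNIV = 1"
  shows "block_prob Q n E = 1 - block_prob Q n (\<lambda>zs. \<not> E zs)"
proof -
  have "block_prob Q n E + block_prob Q n (\<lambda>zs. \<not> E zs) = (\<Sum>zs\<in>L n. prod_list (map Q zs))"
    unfolding bp_sum by (simp add: sum.distrib[symmetric] if_distrib cong: if_cong) (intro sum.cong refl, auto)
  then show ?thesis using E_one[OF assms] by simp
qed

lemma bp_nonneg: "(\<And>z. Q z \<ge> 0) \<Longrightarrow> block_prob Q n E \<ge> 0"
  unfolding bp_sum by (intro sum_nonneg) (simp add: prod_nonneg_map)

lemma Xs_piu: "Xs zs = map fst (map piu zs)" "Us zs = map snd (map piu zs)"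
  by (auto simp: Xs_def Us_def piu_def split_beta)
lemma Xs_piv: "Xs zs = map fst (map piv zs)" "Vs zs = map snd (map piv zs)"
  by (auto simp: Xs_def Vs_def piv_def split_beta)

lemma Pu_fun: "(\<lambda>w. \<Sum>z\<in>{z. piu z = w}. Q z) = Pu Q" by (simp add: Pu_def[abs_def])
lemma Pv_fun: "(\<lambda>w. \<Sum>z\<in>{z. piv z = w}. Q z) = Pv Q" by (simp add: Pv_def[abs_def])

lemma small_eventually:
  assumes "e > 0"
  shows "\<exists>N. \<forall>n\<ge>N. C / real n \<le> e"
proof -
  define N where "N = nat \<lceil>C / e\<rceil> + 1"
  have "C / real n \<le> e" if n: "n \<ge> N" for n
  proof -
    have "real n \<ge> C / e" "real n > 0" using n unfolding N_def by linarith+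
    then have "C \<le> e * real n" using assms by (simp add: field_simps)
    then show ?thesis using \<open>real n > 0\<close> by (simp add: field_simps)
  qed
  then show ?thesis by blast
qed

lemma powr_small:
  assumes "a > 0" "n > 0"
  shows "2 powr (- (a * real n)) \<le> (1 / (a * ln 2)) / real n"
proof -
  have pos: "a * real n * ln 2 > 0" using assms by simp
  have "1 + a * real n * ln 2 \<le> exp (a * real n * ln 2)" by (rule exp_ge_add_one_self)
  moreover have "2 powr (a * real n) = exp (a * real n * ln 2)" by (simp add: powr_def)
  ultimately have "a * real n * ln 2 \<le> 2 powr (a * real n)" by linarith
  then have "inverse (2 powr (a * real n)) \<le> inverse (a * real n * ln 2)"
    using pos by (intro le_imp_inverse_le) auto
  then show ?thesis by (simp add: powr_minus field_simps)
qed


context pw begin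

lemma conv_pair:
  assumes \<delta>: "\<delta> > 0" and n: "n > 0" and D: "\<And>us. finite (D us)" "\<And>us. real (card (D us)) \<le> K"
  shows "(\<Sum>ws\<in>L n. prod_list (map P ws) * (if map fst ws \<in> D (map snd ws) then 1 else 0))
     \<le> VV / (real n * \<delta>^2) + 2 powr (- (real n * (HH P - \<delta>))) * K"
proof -
  define t where "t = 2 powr (- (real n * (HH P - \<delta>)))"
  have "(\<Sum>ws\<in>L n. prod_list (map P ws) * (if map fst ws \<in> D (map snd ws) then 1 else 0))
     \<le> (\<Sum>ws\<in>L n. prod_list (map P ws) * (if map fst ws \<in> D (map snd ws) \<and> prod_list (map (cp P) ws) \<le> t then 1 else 0)
          + prod_list (map P ws) * (if t < prod_list (map (cp P) ws) then 1 else 0))"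
    by (intro sum_mono) (use prod_nonneg_map[OF nonneg] in auto)
  also have "\<dots> = (\<Sum>ws\<in>L n. prod_list (map P ws) * (if map fst ws \<in> D (map snd ws) \<and> prod_list (map (cp P) ws) \<le> t then 1 else 0))
          + (\<Sum>ws\<in>L n. prod_list (map P ws) * (if t < prod_list (map (cp P) ws) then 1 else 0))"
    by (rule sum.distrib)
  also have "\<dots> \<le> t * K + VV / (real n * \<delta>^2)"
    using conv_bound[of t D K n] tail_lo[OF \<delta> n] D unfolding t_def by (intro add_mono) auto
  finally show ?thesis unfolding t_def by simp
qed

lemma VV_nonneg: "VV \<ge> 0" unfolding VV_def using nonneg by (intro sum_nonneg) simp

end

lemma nonneg_from_eps: assumes "\<And>e::real. e > 0 \<Longrightarrow> - e \<le> R" shows "0 \<le> R"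
proof (rule ccontr)
  assume "\<not> 0 \<le> R"
  then have "- R / 2 > 0" by simp
  from assms[OF this] \<open>\<not> 0 \<le> R\<close> show False by linarith
qed

lemma ach_nonneg:
  assumes "achievable Q (R0, R1, R2)"
  shows "0 \<le> R0" "0 \<le> R1" "0 \<le> R2"
proof -
  have "- e \<le> R0 \<and> - e \<le> R1 \<and> - e \<le> R2" if e: "e > 0" for e
  proof -
    obtain N where N: "\<forall>n\<ge>N. \<exists>M0 M1 M2 e' dx dy. M0 \<ge> 1 \<and> M1 \<ge> 1 \<and> M2 \<ge> 1 \<and> is_code n M0 M1 M2 e' \<and>
        max (err_x Q n e' dx) (err_y Q n e' dy) \<le> e \<and>
        log 2 (real M0) / real n \<le> R0 + e \<and> log 2 (real M1) / real n \<le> R1 + e \<and> log 2 (real M2) / real n \<le> R2 + e"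
      using assms e unfolding achievable_def by auto
    have "max N 1 \<ge> N" by simp
    from N[rule_format, OF this] obtain M0 M1 M2 :: nat and e' dx dy where M: "M0 \<ge> 1" "M1 \<ge> 1" "M2 \<ge> 1"
      "is_code (max N 1) M0 M1 M2 e'" "max (err_x Q (max N 1) e' dx) (err_y Q (max N 1) e' dy) \<le> e"
      "log 2 (real M0) / real (max N 1) \<le> R0 + e" "log 2 (real M1) / real (max N 1) \<le> R1 + e" "log 2 (real M2) / real (max N 1) \<le> R2 + e"
      by blast
    have "log 2 (real Mi) / real (max N 1) \<ge> 0" if "Mi \<ge> 1" for Mi :: nat
      using that by (intro divide_nonneg_pos) auto
    from this[OF M(1)] this[OF M(2)] this[OF M(3)] M(6-8) show ?thesis by linarith
  qed
  then show "0 \<le> R0" "0 \<le> R1" "0 \<le> R2" by (auto intro: nonneg_from_eps)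
qed


lemma card_D_le: "finite ((\<lambda>(m0,m1). d m0 m1 us) ` ({1..M0::nat} \<times> {1..M1::nat}))"
  "real (card ((\<lambda>(m0,m1). d m0 m1 us) ` ({1..M0::nat} \<times> {1..M1::nat}))) \<le> real (M0 * M1)"
proof -
  show "finite ((\<lambda>(m0,m1). d m0 m1 us) ` ({1..M0::nat} \<times> {1..M1::nat}))" by simp
  have "card ((\<lambda>(m0,m1). d m0 m1 us) ` ({1..M0::nat} \<times> {1..M1::nat})) \<le> card ({1..M0::nat} \<times> {1..M1::nat})"
    by (rule card_image_le) simp
  then show "real (card ((\<lambda>(m0,m1). d m0 m1 us) ` ({1..M0::nat} \<times> {1..M1::nat}))) \<le> real (M0 * M1)"
    unfolding card_cartesian_product by (simp only: of_nat_le_iff card_atLeastAtMost diff_Suc_1)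
qed

lemma M_le_powr: assumes "M \<ge> (1::nat)" "n > 0" "log 2 (real M) / real n \<le> R"
  shows "real M \<le> 2 powr (real n * R)"
proof -
  have "log 2 (real M) \<le> real n * R" using assms by (simp add: divide_le_eq mult.commute)
  then have "2 powr (log 2 (real M)) \<le> 2 powr (real n * R)" by simp
  then show ?thesis using assms(1) by simp
qed

lemma conv_final:
  fixes H R0 R1 \<gamma> \<epsilon> \<delta> :: real and n M0 M1 :: nat
  assumes "\<gamma> = H - R0 - R1" "\<gamma> > 0" "\<epsilon> \<le> \<gamma>/4" "\<delta> = \<gamma>/4" "n > 0" "M0 \<ge> 1" "M1 \<ge> 1"
    "log 2 (real M0) / real n \<le> R0 + \<epsilon>" "log 2 (real M1) / real n \<le> R1 + \<epsilon>"
  shows "2 powr (- (real n * (H - \<delta>))) * real (M0 * M1) \<le> 2 powr (- (\<gamma>/4 * real n))"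
proof -
  have "2 powr (- (real n * (H - \<delta>))) * real (M0 * M1) \<le>
        2 powr (- (real n * (H - \<delta>))) * (2 powr (real n * (R0 + \<epsilon>)) * 2 powr (real n * (R1 + \<epsilon>)))"
    using M_le_powr[OF assms(6,5,8)] M_le_powr[OF assms(7,5,9)]
    by (simp only: of_nat_mult) (intro mult_left_mono mult_mono, auto)
  also have "\<dots> = 2 powr (- (real n * (H - \<delta>)) + real n * (R0 + \<epsilon>) + real n * (R1 + \<epsilon>))"
    by (simp only: powr_add[symmetric] add.assoc)
  also have "\<dots> \<le> 2 powr (- (\<gamma>/4 * real n))"
  proof -
    have "- (real n * (H - \<delta>)) + real n * (R0 + \<epsilon>) + real n * (R1 + \<epsilon>) = real n * (R0 + R1 - H + \<delta> + 2 * \<epsilon>)"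
      by (simp add: algebra_simps)
    also have "\<dots> \<le> real n * (- \<gamma>/4)" using assms by (intro mult_left_mono) auto
    finally show ?thesis by (simp add: mult.commute)
  qed
  finally show ?thesis .
qed

lemma conv_u:
  fixes Q :: "'x::finite \<times> 'x \<times> 'u::finite \<times> 'v::finite \<Rightarrow> real"
  assumes Qnn: "\<And>z. Q z \<ge> 0" and tot: "sum Q UNIV = 1" and ach: "achievable Q (R0, R1, R2)"
  shows "HH (Pu Q) \<le> R0 + R1"
proof (rule ccontr)
  assume neg: "\<not> ?thesis"
  define H where "H = HH (Pu Q)"
  define \<gamma> where "\<gamma> = H - R0 - R1"
  have \<gamma>: "\<gamma> > 0" using neg unfolding \<gamma>_def H_def by simp
  interpret P: pw "Pu Q" using Pu_pw(1)[OF Qnn tot] .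
  define \<epsilon> where "\<epsilon> = min (\<gamma>/4) (1/4)"
  define \<delta> where "\<delta> = \<gamma>/4"
  have \<epsilon>: "\<epsilon> > 0" "\<epsilon> \<le> \<gamma>/4" "\<epsilon> \<le> 1/4" using \<gamma> by (auto simp: \<epsilon>_def)
  have \<delta>: "\<delta> > 0" using \<gamma> by (simp add: \<delta>_def)
  obtain N1 where N1: "\<forall>n\<ge>N1. \<exists>M0 M1 M2 e dx dy. M0 \<ge> 1 \<and> M1 \<ge> 1 \<and> M2 \<ge> 1 \<and> is_code n M0 M1 M2 e \<and>
        max (err_x Q n e dx) (err_y Q n e dy) \<le> \<epsilon> \<and>
        log 2 (real M0) / real n \<le> R0 + \<epsilon> \<and> log 2 (real M1) / real n \<le> R1 + \<epsilon> \<and> log 2 (real M2) / real n \<le> R2 + \<epsilon>"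
    using ach \<epsilon>(1) unfolding achievable_def by auto
  obtain N2 where N2: "\<forall>n\<ge>N2. (P.VV / \<delta>^2) / real n \<le> 1/8" using small_eventually[of "1/8" "P.VV / \<delta>^2"] by auto
  obtain N3 where N3: "\<forall>n\<ge>N3. (1 / (\<gamma>/4 * ln 2)) / real n \<le> 1/8" using small_eventually[of "1/8" "1 / (\<gamma>/4 * ln 2)"] by auto
  define n where "n = max (max N1 N2) (max N3 1)"
  have n: "n \<ge> N1" "n \<ge> N2" "n \<ge> N3" "n > 0" unfolding n_def by auto
  from N1[rule_format, OF n(1)] obtain M0 M1 M2 :: nat and e dx dy where M: "M0 \<ge> 1" "M1 \<ge> 1" "M2 \<ge> 1"
      "is_code n M0 M1 M2 e" "max (err_x Q n e dx) (err_y Q n e dy) \<le> \<epsilon>"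
      "log 2 (real M0) / real n \<le> R0 + \<epsilon>" "log 2 (real M1) / real n \<le> R1 + \<epsilon>" "log 2 (real M2) / real n \<le> R2 + \<epsilon>"
    by blast
  define Dx where "Dx us = (\<lambda>(m0,m1). dx m0 m1 us) ` ({1..M0} \<times> {1..M1})" for us
  have c1: "1 - \<epsilon> \<le> block_prob Q n (\<lambda>zs. \<not> (case e (Xs zs, Ys zs) of (m0, m1, m2) \<Rightarrow> dx m0 m1 (Us zs) \<noteq> Xs zs))"
    using bp_compl[OF tot, of n "\<lambda>zs. \<not> (case e (Xs zs, Ys zs) of (m0, m1, m2) \<Rightarrow> dx m0 m1 (Us zs) \<noteq> Xs zs)"] M(5)
    unfolding err_x_def by simp
  also have "\<dots> \<le> block_prob Q n (\<lambda>zs. Xs zs \<in> Dx (Us zs))"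
  proof (rule bp_mono[OF Qnn])
    fix zs :: "('x \<times> 'x \<times> 'u \<times> 'v) list" assume len: "length zs = n"
      and ok: "\<not> (case e (Xs zs, Ys zs) of (m0, m1, m2) \<Rightarrow> dx m0 m1 (Us zs) \<noteq> Xs zs)"
    have "e (Xs zs, Ys zs) \<in> {1..M0} \<times> {1..M1} \<times> {1..M2}"
      using M(4) len unfolding is_code_def by (simp add: Xs_def Ys_def)
    then obtain m0 m1 m2 where em: "e (Xs zs, Ys zs) = (m0,m1,m2)" "m0 \<in> {1..M0}" "m1 \<in> {1..M1}" by auto
    then show "Xs zs \<in> Dx (Us zs)" using ok unfolding Dx_def by (auto intro!: image_eqI[of _ _ "(m0,m1)"])
  qed
  also have "\<dots> = (\<Sum>ws\<in>L n. prod_list (map (Pu Q) ws) * (if map fst ws \<in> Dx (map snd ws) then 1 else 0))"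
    using bp_marg[of Q n "\<lambda>ws. map fst ws \<in> Dx (map snd ws)" piu] unfolding Pu_fun by (simp add: Xs_piu)
  also have "\<dots> \<le> P.VV / (real n * \<delta>^2) + 2 powr (- (real n * (HH (Pu Q) - \<delta>))) * real (M0 * M1)"
    using card_D_le unfolding Dx_def by (intro P.conv_pair \<delta> n(4)) auto
  also have "\<dots> \<le> 1/8 + 1/8"
  proof (intro add_mono)
    show "P.VV / (real n * \<delta>^2) \<le> 1/8" using N2 n(2) by (simp add: field_simps)
    have "2 powr (- (real n * (HH (Pu Q) - \<delta>))) * real (M0 * M1) \<le> 2 powr (- (\<gamma>/4 * real n))"
      by (rule conv_final[OF _ \<gamma> \<epsilon>(2) \<delta>_def n(4) M(1,2,6,7)]) (simp add: \<gamma>_def H_def)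
    also have "\<dots> \<le> (1 / (\<gamma>/4 * ln 2)) / real n" using powr_small[of "\<gamma>/4" n] \<gamma> n(4) by simp
    also have "\<dots> \<le> 1/8" using N3 n(3) by simp
    finally show "2 powr (- (real n * (HH (Pu Q) - \<delta>))) * real (M0 * M1) \<le> 1/8" .
  qed
  finally show False using \<epsilon>(3) by simp
qed

lemma conv_v:
  fixes Q :: "'x::finite \<times> 'x \<times> 'u::finite \<times> 'v::finite \<Rightarrow> real"
  assumes Qnn: "\<And>z. Q z \<ge> 0" and tot: "sum Q UNIV = 1" and ach: "achievable Q (R0, R1, R2)"
    and supp: "\<forall>x y u v. Q (x, y, u, v) \<noteq> 0 \<longrightarrow> x = y"
  shows "HH (Pv Q) \<le> R0 + R2"
proof (rule ccontr)
  assume neg: "\<not> ?thesis"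
  define H where "H = HH (Pv Q)"
  define \<gamma> where "\<gamma> = H - R0 - R2"
  have \<gamma>: "\<gamma> > 0" using neg unfolding \<gamma>_def H_def by simp
  interpret P: pw "Pv Q" using Pu_pw(2)[OF Qnn tot] .
  define \<epsilon> where "\<epsilon> = min (\<gamma>/4) (1/4)"
  define \<delta> where "\<delta> = \<gamma>/4"
  have \<epsilon>: "\<epsilon> > 0" "\<epsilon> \<le> \<gamma>/4" "\<epsilon> \<le> 1/4" using \<gamma> by (auto simp: \<epsilon>_def)
  have \<delta>: "\<delta> > 0" using \<gamma> by (simp add: \<delta>_def)
  obtain N1 where N1: "\<forall>n\<ge>N1. \<exists>M0 M1 M2 e dx dy. M0 \<ge> 1 \<and> M1 \<ge> 1 \<and> M2 \<ge> 1 \<and> is_code n M0 M1 M2 e \<and>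
        max (err_x Q n e dx) (err_y Q n e dy) \<le> \<epsilon> \<and>
        log 2 (real M0) / real n \<le> R0 + \<epsilon> \<and> log 2 (real M1) / real n \<le> R1 + \<epsilon> \<and> log 2 (real M2) / real n \<le> R2 + \<epsilon>"
    using ach \<epsilon>(1) unfolding achievable_def by auto
  obtain N2 where N2: "\<forall>n\<ge>N2. (P.VV / \<delta>^2) / real n \<le> 1/8" using small_eventually[of "1/8" "P.VV / \<delta>^2"] by auto
  obtain N3 where N3: "\<forall>n\<ge>N3. (1 / (\<gamma>/4 * ln 2)) / real n \<le> 1/8" using small_eventually[of "1/8" "1 / (\<gamma>/4 * ln 2)"] by auto
  define n where "n = max (max N1 N2) (max N3 1)"
  have n: "n \<ge> N1" "n \<ge> N2" "n \<ge> N3" "n > 0" unfolding n_def by auto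
  from N1[rule_format, OF n(1)] obtain M0 M1 M2 :: nat and e dx dy where M: "M0 \<ge> 1" "M1 \<ge> 1" "M2 \<ge> 1"
      "is_code n M0 M1 M2 e" "max (err_x Q n e dx) (err_y Q n e dy) \<le> \<epsilon>"
      "log 2 (real M0) / real n \<le> R0 + \<epsilon>" "log 2 (real M1) / real n \<le> R1 + \<epsilon>" "log 2 (real M2) / real n \<le> R2 + \<epsilon>"
    by blast
  define Dx where "Dx us = (\<lambda>(m0,m2). dy m0 m2 us) ` ({1..M0} \<times> {1..M2})" for us
  have c1: "1 - \<epsilon> \<le> block_prob Q n (\<lambda>zs. \<not> (case e (Xs zs, Ys zs) of (m0, m1, m2) \<Rightarrow> dy m0 m2 (Vs zs) \<noteq> Ys zs))"
    using bp_compl[OF tot, of n "\<lambda>zs. \<not> (case e (Xs zs, Ys zs) of (m0, m1, m2) \<Rightarrow> dy m0 m2 (Vs zs) \<noteq> Ys zs)"] M(5)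
    unfolding err_y_def by simp
  also have "\<dots> \<le> block_prob Q n (\<lambda>zs. Xs zs \<in> Dx (Vs zs))"
  proof (rule bp_mono[OF Qnn])
    fix zs :: "('x \<times> 'x \<times> 'u \<times> 'v) list" assume len: "length zs = n"
      and ok: "\<not> (case e (Xs zs, Ys zs) of (m0, m1, m2) \<Rightarrow> dy m0 m2 (Vs zs) \<noteq> Ys zs)"
    have "e (Xs zs, Ys zs) \<in> {1..M0} \<times> {1..M1} \<times> {1..M2}"
      using M(4) len unfolding is_code_def by (simp add: Xs_def Ys_def)
    then obtain m0 m1 m2 where em: "e (Xs zs, Ys zs) = (m0,m1,m2)" "m0 \<in> {1..M0}" "m2 \<in> {1..M2}" by auto
    assume sup: "\<forall>z\<in>set zs. Q z \<noteq> 0"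
    have "Ys zs = Xs zs" unfolding Ys_def Xs_def
    proof (rule map_cong[OF refl])
      fix z assume "z \<in> set zs"
      then have "Q z \<noteq> 0" using sup by auto
      then show "(case z of (x, y, u, v) \<Rightarrow> y) = (case z of (x, y, u, v) \<Rightarrow> x)" using supp by (cases z) auto
    qed
    then show "Xs zs \<in> Dx (Vs zs)" using ok em unfolding Dx_def by (auto intro!: image_eqI[of _ _ "(m0,m2)"])
  qed
  also have "\<dots> = (\<Sum>ws\<in>L n. prod_list (map (Pv Q) ws) * (if map fst ws \<in> Dx (map snd ws) then 1 else 0))"
    using bp_marg[of Q n "\<lambda>ws. map fst ws \<in> Dx (map snd ws)" piv] unfolding Pv_fun by (simp add: Xs_piv)
  also have "\<dots> \<le> P.VV / (real n * \<delta>^2) + 2 powr (- (real n * (HH (Pv Q) - \<delta>))) * real (M0 * M2)"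
    using card_D_le unfolding Dx_def by (intro P.conv_pair \<delta> n(4)) auto
  also have "\<dots> \<le> 1/8 + 1/8"
  proof (intro add_mono)
    show "P.VV / (real n * \<delta>^2) \<le> 1/8" using N2 n(2) by (simp add: field_simps)
    have "2 powr (- (real n * (HH (Pv Q) - \<delta>))) * real (M0 * M2) \<le> 2 powr (- (\<gamma>/4 * real n))"
      by (rule conv_final[OF _ \<gamma> \<epsilon>(2) \<delta>_def n(4) M(1,3,6,8)]) (simp add: \<gamma>_def H_def)
    also have "\<dots> \<le> (1 / (\<gamma>/4 * ln 2)) / real n" using powr_small[of "\<gamma>/4" n] \<gamma> n(4) by simp
    also have "\<dots> \<le> 1/8" using N3 n(3) by simp
    finally show "2 powr (- (real n * (HH (Pv Q) - \<delta>))) * real (M0 * M2) \<le> 1/8" .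
  qed
  finally show False using \<epsilon>(3) by simp
qed


definition "bu = (\<lambda>(m0::nat, m1::nat, m2::nat). (m0, m1))"
definition "bv = (\<lambda>(m0::nat, m1::nat, m2::nat). (m0, m2))"

lemma floor_half:
  assumes "y \<ge> (1::real)"
  shows "real (nat \<lfloor>y\<rfloor>) \<ge> y / 2" "real (nat \<lfloor>y\<rfloor>) \<le> y" "nat \<lfloor>y\<rfloor> \<ge> 1"
proof -
  have f1: "real_of_int \<lfloor>y\<rfloor> \<le> y" "y < real_of_int \<lfloor>y\<rfloor> + 1" by linarith+
  have f2: "\<lfloor>y\<rfloor> \<ge> 1" using assms by linarith
  then have eq: "real (nat \<lfloor>y\<rfloor>) = real_of_int \<lfloor>y\<rfloor>" by simp
  show "real (nat \<lfloor>y\<rfloor>) \<le> y" using eq f1 by simp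
  show "nat \<lfloor>y\<rfloor> \<ge> 1" using f2 by (subst le_nat_iff) auto
  show "real (nat \<lfloor>y\<rfloor>) \<ge> y / 2"
  proof (cases "y < 2")
    case True then show ?thesis using eq f2 by linarith
  next
    case False then show ?thesis using eq f1 by linarith
  qed
qed

lemma fib_u:
  assumes "y0 \<in> {1..M0} \<times> {1..M1} \<times> {1..(M2::nat)}"
  shows "real (card {y\<in>{1..M0} \<times> {1..M1} \<times> {1..M2}. bu y = bu y0}) * real (M0 * M1) =
         real (card ({1..M0} \<times> {1..M1} \<times> {1..M2}))"
proof -
  obtain a b c where y0: "y0 = (a,b,c)" by (cases y0) auto
  have "{y\<in>{1..M0} \<times> {1..M1} \<times> {1..M2}. bu y = bu y0} = (\<lambda>c. (a,b,c)) ` {1..M2}"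
    using assms y0 by (auto simp: bu_def)
  then have "card {y\<in>{1..M0} \<times> {1..M1} \<times> {1..M2}. bu y = bu y0} = M2"
    by (simp add: card_image inj_on_def)
  then show ?thesis by (simp add: card_cartesian_product)
qed

lemma fib_v:
  assumes "y0 \<in> {1..M0} \<times> {1..M1} \<times> {1..(M2::nat)}"
  shows "real (card {y\<in>{1..M0} \<times> {1..M1} \<times> {1..M2}. bv y = bv y0}) * real (M0 * M2) =
         real (card ({1..M0} \<times> {1..M1} \<times> {1..M2}))"
proof -
  obtain a b c where y0: "y0 = (a,b,c)" by (cases y0) auto
  have "{y\<in>{1..M0} \<times> {1..M1} \<times> {1..M2}. bv y = bv y0} = (\<lambda>b. (a,b,c)) ` {1..M1}"
    using assms y0 by (auto simp: bv_def)
  then have "card {y\<in>{1..M0} \<times> {1..M1} \<times> {1..M2}. bv y = bv y0} = M1"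
    by (simp add: card_image inj_on_def)
  then show ?thesis by (simp add: card_cartesian_product)
qed

lemma Xs_comp: "map (fst \<circ> piu) zs = Xs zs" "map (snd \<circ> piu) zs = Us zs"
  "map (fst \<circ> piv) zs = Xs zs" "map (snd \<circ> piv) zs = Vs zs"
  by (auto simp: Xs_def Us_def Vs_def piu_def piv_def split_beta)

lemma errx_code:
  fixes Q :: "'x::finite \<times> 'x \<times> 'u::finite \<times> 'v::finite \<Rightarrow> real"
  shows "err_x Q n (\<lambda>(xs, ys). f xs) (\<lambda>m0 m1 us. dec (Pu Q) t n f bu (m0, m1) us) =
    (\<Sum>ws\<in>L n. prod_list (map (Pu Q) ws) * (if dec (Pu Q) t n f bu (bu (f (map fst ws))) (map snd ws) \<noteq> map fst ws then 1 else 0))"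
proof -
  have "err_x Q n (\<lambda>(xs, ys). f xs) (\<lambda>m0 m1 us. dec (Pu Q) t n f bu (m0, m1) us) =
     block_prob Q n (\<lambda>zs. (\<lambda>ws. dec (Pu Q) t n f bu (bu (f (map fst ws))) (map snd ws) \<noteq> map fst ws) (map piu zs))"
    unfolding err_x_def by (simp add: Xs_comp bu_def split_beta)
  also have "\<dots> = (\<Sum>ws\<in>L n. prod_list (map (Pu Q) ws) * (if dec (Pu Q) t n f bu (bu (f (map fst ws))) (map snd ws) \<noteq> map fst ws then 1 else 0))"
    using bp_marg[of Q n "\<lambda>ws. dec (Pu Q) t n f bu (bu (f (map fst ws))) (map snd ws) \<noteq> map fst ws" piu]
    unfolding Pu_fun by simp
  finally show ?thesis .
qed

lemma erry_code:
  fixes Q :: "'x::finite \<times> 'x \<times> 'u::finite \<times> 'v::finite \<Rightarrow> real"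
  assumes Qnn: "\<And>z. Q z \<ge> 0" and supp: "\<forall>x y u v. Q (x, y, u, v) \<noteq> 0 \<longrightarrow> x = y"
  shows "err_y Q n (\<lambda>(xs, ys). f xs) (\<lambda>m0 m2 vs. dec (Pv Q) t n f bv (m0, m2) vs) =
    (\<Sum>ws\<in>L n. prod_list (map (Pv Q) ws) * (if dec (Pv Q) t n f bv (bv (f (map fst ws))) (map snd ws) \<noteq> map fst ws then 1 else 0))"
proof -
  define E where "E zs = (case (\<lambda>(xs, ys). f xs) (Xs zs, Ys zs) of (m0, m1, m2) \<Rightarrow> dec (Pv Q) t n f bv (m0, m2) (Vs zs) \<noteq> Ys zs)"
    for zs :: "('x \<times> 'x \<times> 'u \<times> 'v) list"
  define E' where "E' zs = (\<lambda>ws. dec (Pv Q) t n f bv (bv (f (map fst ws))) (map snd ws) \<noteq> map fst ws) (map piv zs)"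
    for zs :: "('x \<times> 'x \<times> 'u \<times> 'v) list"
  have sup: "Ys zs = Xs zs" if "\<forall>z\<in>set zs. Q z \<noteq> 0" for zs :: "('x \<times> 'x \<times> 'u \<times> 'v) list"
    unfolding Ys_def Xs_def
  proof (rule map_cong[OF refl])
    fix z assume "z \<in> set zs"
    then have "Q z \<noteq> 0" using that by auto
    then show "(case z of (x, y, u, v) \<Rightarrow> y) = (case z of (x, y, u, v) \<Rightarrow> x)" using supp by (cases z) auto
  qed
  have eq: "E zs = E' zs" if "\<forall>z\<in>set zs. Q z \<noteq> 0" for zs
    unfolding E_def E'_def using sup[OF that] by (simp add: Xs_comp bv_def split_beta)
  have "err_y Q n (\<lambda>(xs, ys). f xs) (\<lambda>m0 m2 vs. dec (Pv Q) t n f bv (m0, m2) vs) = block_prob Q n E"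
    unfolding err_y_def E_def ..
  also have "\<dots> = block_prob Q n E'"
  proof -
    have "block_prob Q n E \<le> block_prob Q n E'"
      by (rule bp_mono[where Q=Q and n=n and E=E and E'=E']) (use Qnn eq in auto)
    moreover have "block_prob Q n E' \<le> block_prob Q n E"
      by (rule bp_mono[where Q=Q and n=n and E=E' and E'=E]) (use Qnn eq in auto)
    ultimately show ?thesis by simp
  qed
  also have "\<dots> = (\<Sum>ws\<in>L n. prod_list (map (Pv Q) ws) * (if dec (Pv Q) t n f bv (bv (f (map fst ws))) (map snd ws) \<noteq> map fst ws then 1 else 0))"
    using bp_marg[of Q n "\<lambda>ws. dec (Pv Q) t n f bv (bv (f (map fst ws))) (map snd ws) \<noteq> map fst ws" piv]
    unfolding Pv_fun E'_def by simp
  finally show ?thesis .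
qed


lemma ach_final:
  fixes H R0 R1 \<epsilon> \<delta> :: real and n M0 M1 :: nat
  assumes "H \<le> R0 + R1" "\<epsilon> > 0" "\<delta> = \<epsilon>/4" "n > 0"
    "real M0 \<ge> 2 powr (real n * (R0 + \<epsilon>/2)) / 2" "real M1 \<ge> 2 powr (real n * (R1 + \<epsilon>/2)) / 2"
  shows "1 / (2 powr (- (real n * (H + \<delta>))) * real (M0 * M1)) \<le> 4 * 2 powr (- (3 * \<epsilon> / 4 * real n))"
proof -
  define a where "a = 2 powr (- (real n * (H + \<delta>)))"
  define y0 where "y0 = 2 powr (real n * (R0 + \<epsilon>/2))"
  define y1 where "y1 = 2 powr (real n * (R1 + \<epsilon>/2))"
  have pos: "a > 0" "y0 > 0" "y1 > 0" by (auto simp: a_def y0_def y1_def)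
  have f1: "a * (y0 / 2) * (y1 / 2) \<le> a * real M0 * real M1"
    using assms(5,6) pos unfolding y0_def[symmetric] y1_def[symmetric]
    by (intro mult_mono mult_left_mono) auto
  have f2: "a * (y0 / 2) * (y1 / 2) = (1/4) * 2 powr (- (real n * (H + \<delta>)) + real n * (R0 + \<epsilon>/2) + real n * (R1 + \<epsilon>/2))"
  proof -
    have "a * y0 * y1 = 2 powr (- (real n * (H + \<delta>)) + real n * (R0 + \<epsilon>/2) + real n * (R1 + \<epsilon>/2))"
      unfolding a_def y0_def y1_def by (simp only: powr_add)
    then show ?thesis by simp
  qed
  have f3: "2 powr (3 * \<epsilon> / 4 * real n) \<le> 2 powr (- (real n * (H + \<delta>)) + real n * (R0 + \<epsilon>/2) + real n * (R1 + \<epsilon>/2))"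
  proof -
    have "- (real n * (H + \<delta>)) + real n * (R0 + \<epsilon>/2) + real n * (R1 + \<epsilon>/2) = real n * ((R0 + R1 - H) + \<epsilon> - \<delta>)"
      by (simp add: algebra_simps)
    moreover have "real n * (3 * \<epsilon> / 4) \<le> real n * ((R0 + R1 - H) + \<epsilon> - \<delta>)"
      using assms by (intro mult_left_mono) auto
    ultimately show ?thesis by (simp add: mult.commute)
  qed
  have lb: "(1/4) * 2 powr (3 * \<epsilon> / 4 * real n) \<le> a * real (M0 * M1)"
    using f1 f2 f3 unfolding of_nat_mult mult.assoc by linarith
  have "1 / (a * real (M0 * M1)) \<le> 1 / ((1/4) * 2 powr (3 * \<epsilon> / 4 * real n))"
  proof -
    have p1: "0 < (1/4) * 2 powr (3 * \<epsilon> / 4 * real n)" by simp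
    then have p2: "0 < a * real (M0 * M1)" using lb by linarith
    have p3: "0 < a * real (M0 * M1) * ((1/4) * 2 powr (3 * \<epsilon> / 4 * real n))" using p2 p1 by (rule mult_pos_pos)
    show ?thesis by (rule divide_left_mono[OF lb _ p3]) simp
  qed
  also have "\<dots> = 4 * 2 powr (- (3 * \<epsilon> / 4 * real n))" by (simp add: powr_minus field_simps)
  finally show ?thesis unfolding a_def .
qed

lemma exists_good:
  fixes g :: "'a \<Rightarrow> real"
  assumes "finite F" "F \<noteq> {}" "sum g F \<le> real (card F) * c"
  shows "\<exists>f\<in>F. g f \<le> c"
proof (rule ccontr)
  assume "\<not> ?thesis"
  then have "\<forall>f\<in>F. c < g f" by auto
  then have "(\<Sum>f\<in>F. c) < sum g F" using assms(1,2) by (intro sum_strict_mono) auto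
  then show False using assms(3) by simp
qed


lemma ach_main:
  fixes Q :: "'x::finite \<times> 'x \<times> 'u::finite \<times> 'v::finite \<Rightarrow> real"
  assumes Qnn: "\<And>z. Q z \<ge> 0" and tot: "sum Q UNIV = 1"
    and supp: "\<forall>x y u v. Q (x, y, u, v) \<noteq> 0 \<longrightarrow> x = y"
    and R: "(R0, R1, R2) \<in> Poly Q"
  shows "achievable Q (R0, R1, R2)"
  unfolding achievable_def prod.case
proof (intro allI impI)
  fix \<epsilon> :: real assume \<epsilon>: "\<epsilon> > 0"
  define Hu where "Hu = HH (Pu Q)"
  define Hv where "Hv = HH (Pv Q)"
  have Rc: "0 \<le> R0" "0 \<le> R1" "0 \<le> R2" "Hu \<le> R0 + R1" "Hv \<le> R0 + R2"
    using R unfolding Poly_def Hu_def Hv_def by auto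
  define \<delta> where "\<delta> = \<epsilon>/4"
  have \<delta>: "\<delta> > 0" using \<epsilon> by (simp add: \<delta>_def)
  interpret U: pw "Pu Q" using Pu_pw(1)[OF Qnn tot] .
  interpret V: pw "Pv Q" using Pu_pw(2)[OF Qnn tot] .
  obtain N1 where N1: "\<forall>n\<ge>N1. (U.VV / \<delta>^2) / real n \<le> \<epsilon>/4"
    using small_eventually[of "\<epsilon>/4" "U.VV / \<delta>^2"] \<epsilon> by auto
  obtain N2 where N2: "\<forall>n\<ge>N2. (V.VV / \<delta>^2) / real n \<le> \<epsilon>/4"
    using small_eventually[of "\<epsilon>/4" "V.VV / \<delta>^2"] \<epsilon> by auto
  obtain N3 where N3: "\<forall>n\<ge>N3. (4 * (1 / (3 * \<epsilon> / 4 * ln 2))) / real n \<le> \<epsilon>/4"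
    using small_eventually[of "\<epsilon>/4" "4 * (1 / (3 * \<epsilon> / 4 * ln 2))"] \<epsilon> by auto
  show "\<exists>N. \<forall>n\<ge>N. \<exists>M0 M1 M2 e (dx :: nat \<Rightarrow> nat \<Rightarrow> 'u list \<Rightarrow> 'x list) (dy :: nat \<Rightarrow> nat \<Rightarrow> 'v list \<Rightarrow> 'x list).
        1 \<le> M0 \<and> 1 \<le> M1 \<and> 1 \<le> M2 \<and> is_code n M0 M1 M2 e \<and>
        max (err_x Q n e dx) (err_y Q n e dy) \<le> \<epsilon> \<and>
        log 2 (real M0) / real n \<le> R0 + \<epsilon> \<and> log 2 (real M1) / real n \<le> R1 + \<epsilon> \<and> log 2 (real M2) / real n \<le> R2 + \<epsilon>"
  proof (rule exI[of _ "max (max N1 N2) (max N3 1)"], intro allI impI)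
    fix n assume "max (max N1 N2) (max N3 1) \<le> n"
    then have n: "n \<ge> N1" "n \<ge> N2" "n \<ge> N3" "n > 0" by auto
    define y0 where "y0 = 2 powr (real n * (R0 + \<epsilon>/2))"
    define y1 where "y1 = 2 powr (real n * (R1 + \<epsilon>/2))"
    define y2 where "y2 = 2 powr (real n * (R2 + \<epsilon>/2))"
    have y1s: "y0 \<ge> 1" "y1 \<ge> 1" "y2 \<ge> 1" unfolding y0_def y1_def y2_def
      using Rc \<epsilon> by (auto intro!: ge_one_powr_ge_zero)
    define M0 where "M0 = nat \<lfloor>y0\<rfloor>"
    define M1 where "M1 = nat \<lfloor>y1\<rfloor>"
    define M2 where "M2 = nat \<lfloor>y2\<rfloor>"
    note F0 = floor_half[OF y1s(1), folded M0_def]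
    note F1 = floor_half[OF y1s(2), folded M1_def]
    note F2 = floor_half[OF y1s(3), folded M2_def]
    have rate: "log 2 (real M) / real n \<le> R + \<epsilon>" if "M \<ge> 1" "real M \<le> 2 powr (real n * (R + \<epsilon>/2))" "R \<ge> 0"
      for M :: nat and R :: real
    proof -
      have "log 2 (real M) \<le> log 2 (2 powr (real n * (R + \<epsilon>/2)))" using that by (subst log_le_cancel_iff) auto
      also have "\<dots> = real n * (R + \<epsilon>/2)" by simp
      finally have "log 2 (real M) / real n \<le> R + \<epsilon>/2" using n(4) by (simp add: divide_le_eq mult.commute)
      then show ?thesis using \<epsilon> by linarith
    qed
    define B where "B = {1..M0} \<times> {1..M1} \<times> {1..M2}"
    define FS where "FS = PiE (L n :: 'x list set) (\<lambda>_. B)"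
    define tu where "tu = 2 powr (- (real n * (Hu + \<delta>)))"
    define tv where "tv = 2 powr (- (real n * (Hv + \<delta>)))"
    define ex where "ex f = err_x Q n (\<lambda>(xs, ys). f xs) (\<lambda>m0 m1 us. dec (Pu Q) tu n f bu (m0, m1) us)" for f
    define ey where "ey f = err_y Q n (\<lambda>(xs, ys). f xs) (\<lambda>m0 m2 vs. dec (Pv Q) tv n f bv (m0, m2) vs)" for f
    have finB: "finite B" unfolding B_def by simp
    have BM: "(1,1,1) \<in> B" using F0(3) F1(3) F2(3) unfolding B_def by auto
    have finFS: "finite FS" and neFS: "FS \<noteq> {}" unfolding FS_def using finB BM
      by (auto simp: finite_PiE PiE_eq_empty_iff)
    have tpos: "tu > 0" "tv > 0" by (auto simp: tu_def tv_def)
    have Kpos: "real (M0 * M1) > 0" "real (M0 * M2) > 0" using F0(3) F1(3) F2(3) by auto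
    have sx: "sum ex FS \<le> real (card FS) * (\<epsilon>/4 + \<epsilon>/4)"
    proof -
      have "sum ex FS \<le> real (card FS) *
        ((\<Sum>ws\<in>L n. prod_list (map (Pu Q) ws) * (if prod_list (map (cp (Pu Q)) ws) < tu then 1 else 0)) + 1 / (tu * real (M0 * M1)))"
        unfolding ex_def errx_code FS_def
        by (rule U.avg[OF tpos(1) finB Kpos(1)]) (use fib_u in \<open>simp add: B_def\<close>)
      also have "\<dots> \<le> real (card FS) * (\<epsilon>/4 + \<epsilon>/4)"
      proof (intro mult_left_mono add_mono)
        have "(\<Sum>ws\<in>L n. prod_list (map (Pu Q) ws) * (if prod_list (map (cp (Pu Q)) ws) < tu then 1 else 0)) \<le> U.VV / (real n * \<delta>^2)"
          unfolding tu_def Hu_def by (rule U.tail_hi[OF \<delta> n(4)])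
        also have "\<dots> \<le> \<epsilon>/4" using N1 n(1) by (simp add: field_simps)
        finally show "(\<Sum>ws\<in>L n. prod_list (map (Pu Q) ws) * (if prod_list (map (cp (Pu Q)) ws) < tu then 1 else 0)) \<le> \<epsilon>/4" .
        have "1 / (tu * real (M0 * M1)) \<le> 4 * 2 powr (- (3 * \<epsilon> / 4 * real n))"
          unfolding tu_def by (rule ach_final[OF Rc(4) \<epsilon> \<delta>_def n(4)]) (use F0 F1 y0_def y1_def in auto)
        also have "\<dots> \<le> 4 * ((1 / (3 * \<epsilon> / 4 * ln 2)) / real n)"
          using powr_small[of "3 * \<epsilon> / 4" n] \<epsilon> n(4) by simp
        also have "\<dots> \<le> \<epsilon>/4" using N3 n(3) by simp
        finally show "1 / (tu * real (M0 * M1)) \<le> \<epsilon>/4" .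
      qed simp
      finally show ?thesis .
    qed
    have sy: "sum ey FS \<le> real (card FS) * (\<epsilon>/4 + \<epsilon>/4)"
    proof -
      have "sum ey FS \<le> real (card FS) *
        ((\<Sum>ws\<in>L n. prod_list (map (Pv Q) ws) * (if prod_list (map (cp (Pv Q)) ws) < tv then 1 else 0)) + 1 / (tv * real (M0 * M2)))"
        unfolding ey_def erry_code[OF Qnn supp] FS_def
        by (rule V.avg[OF tpos(2) finB Kpos(2)]) (use fib_v in \<open>simp add: B_def\<close>)
      also have "\<dots> \<le> real (card FS) * (\<epsilon>/4 + \<epsilon>/4)"
      proof (intro mult_left_mono add_mono)
        have "(\<Sum>ws\<in>L n. prod_list (map (Pv Q) ws) * (if prod_list (map (cp (Pv Q)) ws) < tv then 1 else 0)) \<le> V.VV / (real n * \<delta>^2)"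
          unfolding tv_def Hv_def by (rule V.tail_hi[OF \<delta> n(4)])
        also have "\<dots> \<le> \<epsilon>/4" using N2 n(2) by (simp add: field_simps)
        finally show "(\<Sum>ws\<in>L n. prod_list (map (Pv Q) ws) * (if prod_list (map (cp (Pv Q)) ws) < tv then 1 else 0)) \<le> \<epsilon>/4" .
        have "1 / (tv * real (M0 * M2)) \<le> 4 * 2 powr (- (3 * \<epsilon> / 4 * real n))"
          unfolding tv_def by (rule ach_final[OF Rc(5) \<epsilon> \<delta>_def n(4)]) (use F0 F2 y0_def y2_def in auto)
        also have "\<dots> \<le> 4 * ((1 / (3 * \<epsilon> / 4 * ln 2)) / real n)"
          using powr_small[of "3 * \<epsilon> / 4" n] \<epsilon> n(4) by simp
        also have "\<dots> \<le> \<epsilon>/4" using N3 n(3) by simp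
        finally show "1 / (tv * real (M0 * M2)) \<le> \<epsilon>/4" .
      qed simp
      finally show ?thesis .
    qed
    have "sum (\<lambda>f. ex f + ey f) FS \<le> real (card FS) * \<epsilon>"
      using sx sy by (simp add: sum.distrib algebra_simps)
    then obtain f where f: "f \<in> FS" "ex f + ey f \<le> \<epsilon>" using exists_good[OF finFS neFS] by blast
    have exn: "ex f \<ge> 0" "ey f \<ge> 0" unfolding ex_def ey_def err_x_def err_y_def using bp_nonneg[OF Qnn] by auto
    have code: "is_code n M0 M1 M2 (\<lambda>(xs, ys). f xs)"
      unfolding is_code_def using f(1) unfolding FS_def B_def by (auto simp: L_def PiE_def Pi_def)
    show "\<exists>M0 M1 M2 e (dx :: nat \<Rightarrow> nat \<Rightarrow> 'u list \<Rightarrow> 'x list) (dy :: nat \<Rightarrow> nat \<Rightarrow> 'v list \<Rightarrow> 'x list).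
        1 \<le> M0 \<and> 1 \<le> M1 \<and> 1 \<le> M2 \<and> is_code n M0 M1 M2 e \<and>
        max (err_x Q n e dx) (err_y Q n e dy) \<le> \<epsilon> \<and>
        log 2 (real M0) / real n \<le> R0 + \<epsilon> \<and> log 2 (real M1) / real n \<le> R1 + \<epsilon> \<and> log 2 (real M2) / real n \<le> R2 + \<epsilon>"
    proof (intro exI conjI)
      show "max (err_x Q n (\<lambda>(xs, ys). f xs) (\<lambda>m0 m1 us. dec (Pu Q) tu n f bu (m0, m1) us))
                (err_y Q n (\<lambda>(xs, ys). f xs) (\<lambda>m0 m2 vs. dec (Pv Q) tv n f bv (m0, m2) vs)) \<le> \<epsilon>"
        using f(2) exn unfolding ex_def ey_def by simp
      show "is_code n M0 M1 M2 (\<lambda>(xs, ys). f xs)" by (rule code)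
      show "log 2 (real M0) / real n \<le> R0 + \<epsilon>" using rate F0 Rc(1) y0_def by blast
      show "log 2 (real M1) / real n \<le> R1 + \<epsilon>" using rate F1 Rc(2) y1_def by blast
      show "log 2 (real M2) / real n \<le> R2 + \<epsilon>" using rate F2 Rc(3) y2_def by blast
    qed (use F0 F1 F2 in auto)
  qed
qed


lemma Poly_closed: "closed (Poly Q)"
proof -
  have "Poly Q = {R. 0 \<le> fst R \<and> 0 \<le> fst (snd R) \<and> 0 \<le> snd (snd R) \<and>
      HH (Pu Q) \<le> fst R + fst (snd R) \<and> HH (Pv Q) \<le> fst R + snd (snd R)}"
    unfolding Poly_def by auto
  also have "closed \<dots>"
    by (intro closed_Collect_conj closed_Collect_le continuous_intros)
  finally show ?thesis .
qed

theorem theorem4: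
  fixes Q :: "'x::finite \<times> 'x \<times> 'u::finite \<times> 'v::finite \<Rightarrow> real"
  assumes "\<forall>z. Q z \<ge> 0"
    and "(\<Sum>z\<in>UNIV. Q z) = 1"
    and "\<forall>x y u v. Q (x, y, u, v) \<noteq> 0 \<longrightarrow> x = y"
  shows "rate_region Q = closure (\<Union>p\<in>Pstar Q. Rstar p)"
proof -
  have Qnn: "\<And>z. Q z \<ge> 0" using assms(1) by blast
  have tot: "sum Q UNIV = 1" using assms(2) by simp
  have RR: "rate_region Q = Poly Q"
  proof
    show "rate_region Q \<subseteq> Poly Q"
    proof
      fix R assume "R \<in> rate_region Q"
      then have a: "achievable Q R" by (simp add: rate_region_def)
      obtain R0 R1 R2 where R: "R = (R0,R1,R2)" by (cases R) auto
      show "R \<in> Poly Q" using ach_nonneg[OF a[unfolded R]] conv_u[OF Qnn tot a[unfolded R]]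
          conv_v[OF Qnn tot a[unfolded R] assms(3)] unfolding R Poly_def by auto
    qed
    show "Poly Q \<subseteq> rate_region Q"
    proof
      fix R assume "R \<in> Poly Q"
      moreover obtain R0 R1 R2 where R: "R = (R0,R1,R2)" by (cases R) auto
      ultimately show "R \<in> rate_region Q" using ach_main[OF Qnn tot assms(3)] by (simp add: rate_region_def)
    qed
  qed
  have U: "(\<Union>p\<in>Pstar Q. Rstar p) = Poly Q"
  proof
    show "(\<Union>p\<in>Pstar Q. Rstar p) \<subseteq> Poly Q" using T3 by blast
    show "Poly Q \<subseteq> (\<Union>p\<in>Pstar Q. Rstar p)" using T4[OF Qnn tot] by blast
  qed
  show ?thesis unfolding RR U using Poly_closed closure_closed by metis
qed


end
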